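(* In the setting described in the context, assume the problem is mildly ill-posed, i.e. $a_k\asymp k^{-p}$ as $k\to\infty$ for some $p>0$, let $\beta>0$ with $\beta+p>1/2$, and take the prior variances $\lambda_k=\rho_n^2k^{-1-2\alpha}$ with $\alpha>0$ and any positive sequence $\rho_n$ with $\rho_n^2n\to\infty$. Then for any $K>0$ and any sequence $M_n\to\infty$, \[\sup_{f_0\in S^\beta:\|f_0\|_\beta\le K}\mathbb{E}_{f_0}\Pi_n\big(f:\|f-f_0\|_{H_1}\ge M_n\varepsilon_n\mid U^n\big)\to 0,\] where \[\varepsilon_n=\varepsilon_{n,1}\vee\varepsilon_{n,2}=(\rho_n^2n)^{-\beta/(2\alpha+2p+1)\wedge 1}\vee \rho_n(\rho_n^2n)^{-\alpha/(2\alpha+2p+1)}.\] In particular: (i) if $\rho_n=1$, then $\varepsilon_n=n^{-(\alpha\wedge\beta)/(2\alpha+2p+1)}$; (ii) if $\beta\le 2\alpha+2p+1$ and $\rho_n\asymp n^{(\alpha-\beta)/(2\beta+2p+1)}$, then $\varepsilon_n=n^{-\beta/(2\beta+2p+1)}$; (iii) if $\beta>2\alpha+2p+1$, then for every scaling $\rho_n$, $\varepsilon_n\gg n^{-\beta/(2\beta+2p+1)}$.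
   Context: Let $H_1,H_2\subset L^2([0,1])$ be Hilbert spaces of functions on $[0,1]$ and $A:H_1\to H_2$ an injective compact linear operator. Let $\{\varphi_k\}_{k\ge1}$ be an orthonormal eigenbasis of $A^*A$ in $H_1$, $A^*A\varphi_k=a_k^2\varphi_k$ with $a_k>0$, and let $\psi_k:=A\varphi_k/a_k$ (an orthonormal system, $A\varphi_k=a_k\psi_k$). For $f\in H_1$ write $f_k=\langle f,\varphi_k\rangle$, identify $f$ with $(f_k)_k$, so $\|f\|_{H_1}^2=\sum_kf_k^2$. For $\beta\ge0$, $S^\beta$ is the set of $f=\sum_kf_k\varphi_k$ with $\|f\|_\beta:=(\sum_k f_k^2k^{2\beta})^{1/2}<\infty$. Observations: for $n\ge2$, design points $x_i=i/n$, and $Y_i=Af(x_i)+\xi_i$, $i=1,\dots,n$, with $\xi_i$ i.i.d. $\mathcal N(0,1)$ ($Af$ continuous). Put $\langle g,h\rangle_d:=\frac1n\sum_{i=1}^ng(x_i)h(x_i)$. Standing assumption on the conjugate basis: (i) $\langle\psi_j,\psi_k\rangle_d=\delta_{jk}$ for $1\le j,k\le n-1$; (ii) for $1\le k\le n-1$ and fixed $l\in\mathbb N$, among $j\in\{ln,\dots,(l+1)n-1\}$ there is exactly one $\tilde j=ln+\bar k$ ($\bar k$ depending only on the parity of $l$) with $0<|\langle\psi_{\tilde j},\psi_k\rangle_d|<M$ for a fixed constant $M$, and $\langle\psi_j,\psi_k\rangle_d=0$ for all other such $j$. Transformed data: $U_k:=\frac1n\sum_{i=1}^nY_i\psi_k(x_i)$,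 $k=1,\dots,n-1$, $U^n=(U_1,\dots,U_{n-1})$; thus $U_k=a_kf_k+R_k(f)+\zeta_k/\sqrt n$ with $R_k(f)=\langle A\sum_{j\ge n}f_j\varphi_j,\psi_k\rangle_d$ and $\zeta_k=n^{-1/2}\sum_{i=1}^n\xi_i\psi_k(x_i)$. $\mathbb E_{f_0}$ (resp. $\mathbb P_{f_0}$) denotes expectation (probability) when the data are generated with $f=f_0$. Prior: $f_k\sim\mathcal N(0,\lambda_k)$ independently for $k<n$, $f_k=0$ for $k\ge n$, independent of the noise. The posterior is $\Pi_n(\cdot\mid U^n)=\bigotimes_{k\in\mathbb N}\mathcal N(\hat f_k,\sigma_k^2)$ (on coefficients) with $\hat f_k=\frac{na_k\lambda_k\mathbf 1\{k<n\}}{na_k^2\lambda_k+1}U_k$, $\sigma_k^2=\frac{\lambda_k\mathbf 1\{k<n\}}{na_k^2\lambda_k+1}$. Notation: $a\vee b=\max$, $a\wedge b=\min$; $a_n\lesssim b_n$ means $a_n\le Cb_n$ for a constant $C$; $a_n\asymp b_n$ means $a_n/b_n$ is bounded away from $0$ and $\infty$; $a_n\ll b_n$ means $a_n/b_n\to0$. *)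

theory Defs
  imports "HOL-Probability.Probability" "HOL-Library.Landau_Symbols"
begin

text \<open>Coefficients f = (f_k)_{k>=1} of an element of H_1 w.r.t. the eigenbasis phi_k
  (index 0 is unused). The conjugate functions psi_k are real functions on [0,1].\<close>

definition dip :: "nat \<Rightarrow> (real \<Rightarrow> real) \<Rightarrow> (real \<Rightarrow> real) \<Rightarrow> real" where
  "dip n g h = (\<Sum>i=1..n. g (real i / real n) * h (real i / real n)) / real n"

definition H1norm :: "(nat \<Rightarrow> real) \<Rightarrow> real" where
  "H1norm f = sqrt (infsum (\<lambda>k. (f k)\<^sup>2) {1..})"

definition inS :: "real \<Rightarrow> (nat \<Rightarrow> real) \<Rightarrow> bool" where
  "inS \<beta> f \<longleftrightarrow> (\<lambda>k. (f k)\<^sup>2) summable_on {1..} \<and>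
                 (\<lambda>k. (f k)\<^sup>2 * real k powr (2 * \<beta>)) summable_on {1..}"

definition Snorm :: "real \<Rightarrow> (nat \<Rightarrow> real) \<Rightarrow> real" where
  "Snorm \<beta> f = sqrt (infsum (\<lambda>k. (f k)\<^sup>2 * real k powr (2 * \<beta>)) {1..})"

text \<open>A f as a function: A f = sum_k a_k f_k psi_k (singular value decomposition).\<close>
definition Aop :: "(nat \<Rightarrow> real) \<Rightarrow> (nat \<Rightarrow> real \<Rightarrow> real) \<Rightarrow> (nat \<Rightarrow> real) \<Rightarrow> real \<Rightarrow> real" where
  "Aop a \<psi> f x = (\<Sum>j. a (Suc j) * f (Suc j) * \<psi> (Suc j) x)"

definition Udata :: "(nat \<Rightarrow> real) \<Rightarrow> (nat \<Rightarrow> real \<Rightarrow> real) \<Rightarrow> nat \<Rightarrow> (nat \<Rightarrow> real)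
                     \<Rightarrow> (nat \<Rightarrow> real) \<Rightarrow> nat \<Rightarrow> real" where
  "Udata a \<psi> n f0 \<xi> k =
     (\<Sum>i=1..n. (Aop a \<psi> f0 (real i / real n) + \<xi> i) * \<psi> k (real i / real n)) / real n"

definition gauss :: "real \<Rightarrow> real \<Rightarrow> real measure" where
  "gauss m v = (if v > 0 then density lborel (normal_density m (sqrt v)) else return lborel m)"

definition post_mean :: "(nat \<Rightarrow> real) \<Rightarrow> (nat \<Rightarrow> real) \<Rightarrow> nat \<Rightarrow> (nat \<Rightarrow> real) \<Rightarrow> nat \<Rightarrow> real" where
  "post_mean a lam n U k =
     (if k < n then real n * a k * lam k / (real n * (a k)\<^sup>2 * lam k + 1) * U k else 0)"

definition post_var :: "(nat \<Rightarrow> real) \<Rightarrow> (nat \<Rightarrow> real) \<Rightarrow> nat \<Rightarrow> nat \<Rightarrow> real" where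
  "post_var a lam n k = (if k < n then lam k / (real n * (a k)\<^sup>2 * lam k + 1) else 0)"

definition posterior :: "(nat \<Rightarrow> real) \<Rightarrow> (nat \<Rightarrow> real) \<Rightarrow> nat \<Rightarrow> (nat \<Rightarrow> real) \<Rightarrow> (nat \<Rightarrow> real) measure" where
  "posterior a lam n U = PiM {1..} (\<lambda>k. gauss (post_mean a lam n U k) (post_var a lam n k))"

definition noise :: "nat \<Rightarrow> (nat \<Rightarrow> real) measure" where
  "noise n = PiM {1..n} (\<lambda>_. density lborel std_normal_density)"

definition exp_post_prob :: "(nat \<Rightarrow> real) \<Rightarrow> (nat \<Rightarrow> real \<Rightarrow> real) \<Rightarrow> (nat \<Rightarrow> real) \<Rightarrow> nat
                             \<Rightarrow> (nat \<Rightarrow> real) \<Rightarrow> real \<Rightarrow> real" where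
  "exp_post_prob a \<psi> lam n f0 r =
     (\<integral>\<xi>. measure (posterior a lam n (Udata a \<psi> n f0 \<xi>))
              {f \<in> space (posterior a lam n (Udata a \<psi> n f0 \<xi>)). H1norm (\<lambda>k. f k - f0 k) \<ge> r}
        \<partial>noise n)"

end

theory Submission
  imports Defs
begin


lemma prob_space_gauss: "prob_space (gauss m v)"
  unfolding gauss_def by (auto intro: prob_space_normal_density prob_space_return)

lemma sets_gauss[measurable_cong, simp]: "sets (gauss m v) = sets borel"
  unfolding gauss_def by auto

lemma space_gauss[simp]: "space (gauss m v) = UNIV"
  unfolding gauss_def by (auto simp: space_density)

lemma gauss_sq:
  assumes "v \<ge> 0"
  shows "integrable (gauss m v) (\<lambda>y. (y - c)\<^sup>2) \<and> (\<integral>y. (y - c)\<^sup>2 \<partial>gauss m v) = v + (m - c)\<^sup>2"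
proof (cases "v > 0")
  case True
  define s where "s = sqrt v"
  have s: "s > 0" using True by (simp add: s_def)
  have g: "gauss m v = density lborel (normal_density m s)" using True by (simp add: gauss_def s_def)
  have e: "\<And>y. normal_density m s y * (y - c)\<^sup>2 = normal_density m s y * (y - m)^(2*1)
      + 2 * (m - c) * (normal_density m s y * (y - m)^(2*0+1)) + (m - c)\<^sup>2 * normal_density m s y"
    by (simp add: power2_eq_square algebra_simps)
  have h1: "has_bochner_integral lborel (\<lambda>y. normal_density m s y * (y - m)^(2*1)) (s\<^sup>2)"
    using normal_moment_even[OF s, of m 1] by (simp add: power2_eq_square)
  have h2: "has_bochner_integral lborel (\<lambda>y. normal_density m s y * (y - m)^(2*0+1)) 0"
    using normal_moment_odd[OF s, of m 0] by simp
  have h3: "has_bochner_integral lborel (normal_density m s) 1"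
    using integrable_normal_density[OF s] integral_normal_density[OF s] by (simp add: has_bochner_integral_iff)
  have H: "has_bochner_integral lborel (\<lambda>y. normal_density m s y * (y - c)\<^sup>2) (s\<^sup>2 + 2 * (m - c) * 0 + (m - c)\<^sup>2 * 1)"
    unfolding e
    by (intro has_bochner_integral_add has_bochner_integral_mult_right h1 h2 h3)
  have int: "integrable (gauss m v) (\<lambda>y. (y - c)\<^sup>2)"
    unfolding g using H
    by (subst integrable_density) (auto simp: normal_density_nonneg has_bochner_integral_iff)
  have "(\<integral>y. (y - c)\<^sup>2 \<partial>gauss m v) = s\<^sup>2 + (m - c)\<^sup>2"
    unfolding g using H
    by (subst integral_density) (auto simp: normal_density_nonneg has_bochner_integral_iff)
  then show ?thesis using int s True by (simp add: s_def)
next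
  case False
  then have v: "v = 0" using assms by simp
  have g: "gauss m v = return lborel m" using v by (simp add: gauss_def)
  have ae: "AE y in return lborel m. (y - c)\<^sup>2 = (m - c)\<^sup>2"
    by (subst AE_return) auto
  have i: "integrable (return lborel m) (\<lambda>y. (y - c)\<^sup>2)"
    by (subst integrable_cong_AE[OF _ _ ae]) (auto simp: prob_space_return prob_space.finite_measure finite_measure.integrable_const)
  show ?thesis using i v
    by (simp add: integral_return gauss_def)
qed

lemma PiM_gauss_sq:
  assumes v: "\<And>k. v k \<ge> 0" and k: "k \<ge> 1"
  shows "integrable (PiM {1..} (\<lambda>k. gauss (m k) (v k))) (\<lambda>f. (f k - c)\<^sup>2) \<and>
    (\<integral>f. (f k - c)\<^sup>2 \<partial>PiM {1..} (\<lambda>k. gauss (m k) (v k))) = v k + (m k - c)\<^sup>2"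
proof -
  let ?M = "PiM {1..} (\<lambda>k. gauss (m k) (v k))"
  have d: "distr ?M (gauss (m k) (v k)) (\<lambda>\<omega>. \<omega> k) = gauss (m k) (v k)"
    using k by (intro distr_PiM_component) (auto simp: prob_space_gauss)
  have meas: "(\<lambda>\<omega>. \<omega> k) \<in> measurable ?M (gauss (m k) (v k))"
    using k by (intro measurable_component_singleton) auto
  have G: "integrable (gauss (m k) (v k)) (\<lambda>y. (y - c)\<^sup>2) \<and> (\<integral>y. (y - c)\<^sup>2 \<partial>gauss (m k) (v k)) = v k + (m k - c)\<^sup>2"
    using gauss_sq[OF v] by blast
  have "integrable ?M (\<lambda>f. (f k - c)\<^sup>2)"
    using G integrable_distr_eq[OF meas, of "\<lambda>y. (y - c)\<^sup>2"] d by simp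
  moreover have "(\<integral>f. (f k - c)\<^sup>2 \<partial>?M) = v k + (m k - c)\<^sup>2"
    using G integral_distr[OF meas, of "\<lambda>y. (y - c)\<^sup>2"] d by simp
  ultimately show ?thesis by blast
qed

lemma post_bound:
  fixes m v f0 :: "nat \<Rightarrow> real" and n :: nat and r :: real
  assumes v: "\<And>k. v k \<ge> 0" and tail: "\<And>k. k \<ge> n \<Longrightarrow> m k = 0 \<and> v k = 0" and r: "r > 0"
    and n: "n \<ge> 1"
    and sq: "(\<lambda>k. (f0 k)\<^sup>2) summable_on {1..}"
  shows "measure (PiM {1..} (\<lambda>k. gauss (m k) (v k)))
      {f \<in> space (PiM {1..} (\<lambda>k. gauss (m k) (v k))). H1norm (\<lambda>k. f k - f0 k) \<ge> r}
     \<le> ((\<Sum>k\<in>{1..<n}. (m k - f0 k)\<^sup>2 + v k) + infsum (\<lambda>k. (f0 k)\<^sup>2) {n..}) / r\<^sup>2"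
proof -
  let ?M = "PiM {1..} (\<lambda>k. gauss (m k) (v k))"
  let ?S = "{f \<in> space ?M. H1norm (\<lambda>k. f k - f0 k) \<ge> r}"
  define T where "T = infsum (\<lambda>k. (f0 k)\<^sup>2) {n..}"
  have T0: "T \<ge> 0" unfolding T_def by (intro infsum_nonneg) auto
  interpret prob_space ?M by (intro prob_space_PiM) (auto simp: prob_space_gauss)
  define g where "g f = (\<Sum>k\<in>{1..<n}. (f k - f0 k)\<^sup>2) + T" for f :: "nat \<Rightarrow> real"
  have g0: "g f \<ge> 0" for f unfolding g_def using T0 by (intro add_nonneg_nonneg sum_nonneg) auto
  have ae0: "AE f in ?M. \<forall>k\<in>{n..}. f k = 0"
  proof (rule AE_ball_countable')
    fix k assume k: "k \<in> {n..}"
    then have g: "gauss (m k) (v k) = return lborel 0" using tail[of k] by (simp add: gauss_def)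
    have a0: "AE x in gauss (m k) (v k). x = 0" unfolding g by (subst AE_return) auto
    show "AE f in ?M. f k = 0"
      using k n a0 by (intro AE_PiM_component[where M="\<lambda>k. gauss (m k) (v k)"]) (auto simp: prob_space_gauss g AE_return)
  qed simp
  have sub: "{n..} \<subseteq> {1..}" using n by auto
  have eqH: "(H1norm (\<lambda>k. f k - f0 k))\<^sup>2 = g f" if f: "\<forall>k\<in>{n..}. f k = 0" for f :: "nat \<Rightarrow> real"
  proof -
    let ?h = "\<lambda>k. (f k - f0 k)\<^sup>2"
    have un: "{1..} = {1..<n} \<union> {n..}" using n by auto
    have s2: "?h summable_on {n..}"
    proof -
      have "(\<lambda>k. (f0 k)\<^sup>2) summable_on {n..}" using summable_on_subset[OF sq sub] .
      then show ?thesis by (rule summable_on_cong[THEN iffD1, rotated]) (use f in auto)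
    qed
    have i2: "infsum ?h {n..} = T" unfolding T_def by (rule infsum_cong) (use f in auto)
    have "infsum ?h {1..} = (\<Sum>k\<in>{1..<n}. (f k - f0 k)\<^sup>2) + T"
      unfolding un by (subst infsum_Un_disjoint) (auto simp: s2 i2 summable_on_finite infsum_finite)
    moreover have "infsum ?h {1..} \<ge> 0" by (intro infsum_nonneg) auto
    ultimately show ?thesis unfolding H1norm_def g_def by simp
  qed
  have I: "\<And>k c. k \<ge> 1 \<Longrightarrow> integrable ?M (\<lambda>f. (f k - c)\<^sup>2)"
    and IV: "\<And>k c. k \<ge> 1 \<Longrightarrow> (\<integral>f. (f k - c)\<^sup>2 \<partial>?M) = v k + (m k - c)\<^sup>2"
    using PiM_gauss_sq[of v, OF v, of _ m] by blast+
  have Isum: "integrable ?M (\<lambda>f. \<Sum>k\<in>{1..<n}. (f k - f0 k)\<^sup>2)"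
      by (rule Bochner_Integration.integrable_sum) (rule I, auto)
  have gint: "integrable ?M g"
    unfolding g_def by (intro Bochner_Integration.integrable_add Isum integrable_const)
  have gval: "(\<integral>f. g f \<partial>?M) = (\<Sum>k\<in>{1..<n}. (m k - f0 k)\<^sup>2 + v k) + T"
  proof -
    have "(\<integral>f. g f \<partial>?M) = (\<integral>f. (\<Sum>k\<in>{1..<n}. (f k - f0 k)\<^sup>2) \<partial>?M) + T"
      unfolding g_def
      using prob_space by (subst Bochner_Integration.integral_add[OF Isum integrable_const]) simp
    moreover have "(\<integral>f. (\<Sum>k\<in>{1..<n}. (f k - f0 k)\<^sup>2) \<partial>?M) = (\<Sum>k\<in>{1..<n}. \<integral>f. (f k - f0 k)\<^sup>2 \<partial>?M)"
      by (rule Bochner_Integration.integral_sum) (rule I, auto)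
    moreover have "(\<Sum>k\<in>{1..<n}. \<integral>f. (f k - f0 k)\<^sup>2 \<partial>?M) = (\<Sum>k\<in>{1..<n}. (m k - f0 k)\<^sup>2 + v k)"
      by (rule sum.cong[OF refl], subst IV) auto
    ultimately show ?thesis by simp
  qed
  show ?thesis
  proof (cases "?S \<in> sets ?M")
    case False
    then have "measure ?M ?S = 0" by (rule measure_notin_sets)
    moreover have "(\<Sum>k\<in>{1..<n}. (m k - f0 k)\<^sup>2 + v k) + T \<ge> 0"
      using T0 v by (intro add_nonneg_nonneg sum_nonneg) auto
    ultimately show ?thesis unfolding T_def by simp
  next
    case True
    have "measure ?M ?S = (\<integral>f. indicator ?S f \<partial>?M)" using True by simp
    also have "\<dots> \<le> (\<integral>f. g f / r\<^sup>2 \<partial>?M)"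
    proof (rule integral_mono_AE)
      show "integrable ?M (indicat_real ?S)"
        by (rule integrable_real_indicator[OF True]) (unfold infinity_ennreal_def, rule emeasure_finite[THEN less_top[THEN iffD1]])
      show "integrable ?M (\<lambda>f. g f / r\<^sup>2)" using gint by simp
      show "AE f in ?M. indicat_real ?S f \<le> g f / r\<^sup>2"
        using ae0
      proof eventually_elim
        case (elim f)
        show ?case
        proof (cases "f \<in> ?S")
          case True
          then have "r \<le> H1norm (\<lambda>k. f k - f0 k)" by simp
          then have "r\<^sup>2 \<le> (H1norm (\<lambda>k. f k - f0 k))\<^sup>2" using r by (intro power_mono) auto
          then have "r\<^sup>2 \<le> g f" using eqH[OF elim] by simp
          then show ?thesis using True r by simp
        next
          case False then show ?thesis using g0[of f] by simp
        qed
      qed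
    qed
    also have "\<dots> = ((\<Sum>k\<in>{1..<n}. (m k - f0 k)\<^sup>2 + v k) + T) / r\<^sup>2"
      using gval by simp
    finally show ?thesis unfolding T_def .
  qed
qed



abbreviation SN where "SN \<equiv> density lborel std_normal_density"

lemma SN_1: "integrable SN (\<lambda>x. x) \<and> integral\<^sup>L SN (\<lambda>x. x) = 0"
proof -
  have h: "has_bochner_integral lborel (\<lambda>x. std_normal_density x * x) 0"
    using std_normal_moment_odd[of 0] by simp
  show ?thesis using h
    by (simp add: integrable_density integral_density has_bochner_integral_iff normal_density_nonneg)
qed

lemma SN_2: "integrable SN (\<lambda>x. x * x) \<and> integral\<^sup>L SN (\<lambda>x. x * x) = 1"
proof -
  have h: "has_bochner_integral lborel (\<lambda>x. std_normal_density x * (x * x)) 1"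
    using std_normal_moment_even[of 1] by (simp add: power2_eq_square)
  have "integrable lborel (\<lambda>x. std_normal_density x * (x * x))" "integral\<^sup>L lborel (\<lambda>x. std_normal_density x * (x * x)) = 1"
    using h by (auto simp: has_bochner_integral_iff)
  then show ?thesis
    by (simp add: integrable_density integral_density normal_density_nonneg)
qed
lemma SN_0: "integrable SN (\<lambda>x. 1::real) \<and> integral\<^sup>L SN (\<lambda>x. 1::real) = 1"
proof -
  interpret prob_space SN by (rule prob_space_normal_density) simp
  have "measure SN (space SN) = 1" by (rule prob_space)
  then show ?thesis by simp
qed

lemma noise_prod:
  assumes i: "i \<in> {1..n}" and j: "j \<in> {1..n}"
  shows "integrable (noise n) (\<lambda>\<xi>. \<xi> i * \<xi> j) \<and> (\<integral>\<xi>. \<xi> i * \<xi> j \<partial>noise n) = (if i = j then 1 else 0)"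
proof -
  interpret product_sigma_finite "\<lambda>_::nat. SN"
    by (simp add: product_sigma_finite_def prob_space_imp_sigma_finite prob_space_normal_density)
  define f where "f = (\<lambda>t x. (if t = i then x else 1) * (if t = j then x else (1::real)))"
  have fi: "integrable SN (f t)" for t
    using SN_0 SN_1 SN_2 by (cases "t = i"; cases "t = j") (simp_all add: f_def)
  have fv: "integral\<^sup>L SN (f t) = (if t = i \<and> t = j then 1 else if t = i \<or> t = j then 0 else 1)" for t
    using SN_0 SN_1 SN_2 by (cases "t = i"; cases "t = j") (simp_all add: f_def)
  have pe: "(\<Prod>t\<in>{1..n}. f t (\<xi> t)) = \<xi> i * \<xi> j" for \<xi> :: "nat \<Rightarrow> real"
    unfolding f_def prod.distrib using i j by (simp add: prod.delta)
  have "integrable (noise n) (\<lambda>\<xi>. \<Prod>t\<in>{1..n}. f t (\<xi> t))"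
    unfolding noise_def by (rule product_integrable_prod) (auto simp: fi)
  moreover have "(\<integral>\<xi>. (\<Prod>t\<in>{1..n}. f t (\<xi> t)) \<partial>noise n) = (\<Prod>t\<in>{1..n}. integral\<^sup>L SN (f t))"
    unfolding noise_def by (rule product_integral_prod) (auto simp: fi)
  moreover have "(\<Prod>t\<in>{1..n}. integral\<^sup>L SN (f t)) = (if i = j then 1 else 0)"
  proof (cases "i = j")
    case True then show ?thesis unfolding fv by (auto intro!: prod.neutral)
  next
    case False then show ?thesis unfolding fv using i by (auto simp: prod_zero_iff)
  qed
  ultimately show ?thesis unfolding pe by simp
qed

lemma noise_single:
  assumes i: "i \<in> {1..n}"
  shows "integrable (noise n) (\<lambda>\<xi>. \<xi> i) \<and> (\<integral>\<xi>. \<xi> i \<partial>noise n) = 0"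
proof -
  interpret product_sigma_finite "\<lambda>_::nat. SN"
    by (simp add: product_sigma_finite_def prob_space_imp_sigma_finite prob_space_normal_density)
  define f where "f = (\<lambda>t x. (if t = i then x else (1::real)))"
  have fi: "integrable SN (f t)" for t
    using SN_0 SN_1 by (cases "t = i") (simp_all add: f_def)
  have fv: "integral\<^sup>L SN (f t) = (if t = i then 0 else 1)" for t
    using SN_0 SN_1 by (cases "t = i") (simp_all add: f_def)
  have pe: "(\<Prod>t\<in>{1..n}. f t (\<xi> t)) = \<xi> i" for \<xi> :: "nat \<Rightarrow> real"
    unfolding f_def using i by (simp add: prod.delta)
  have "integrable (noise n) (\<lambda>\<xi>. \<Prod>t\<in>{1..n}. f t (\<xi> t))"
    unfolding noise_def by (rule product_integrable_prod) (auto simp: fi)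
  moreover have "(\<integral>\<xi>. (\<Prod>t\<in>{1..n}. f t (\<xi> t)) \<partial>noise n) = (\<Prod>t\<in>{1..n}. integral\<^sup>L SN (f t))"
    unfolding noise_def by (rule product_integral_prod) (auto simp: fi)
  moreover have "(\<Prod>t\<in>{1..n}. integral\<^sup>L SN (f t)) = 0"
    unfolding fv using i by (subst prod_zero_iff) auto
  ultimately show ?thesis unfolding pe by simp
qed

lemma prob_noise: "prob_space (noise n)"
  unfolding noise_def by (intro prob_space_PiM) (auto simp: prob_space_normal_density)

lemma noise_quad:
  fixes w :: "nat \<Rightarrow> real"
  shows "integrable (noise n) (\<lambda>\<xi>. (b + (\<Sum>i\<in>{1..n}. w i * \<xi> i))\<^sup>2) \<and>
    (\<integral>\<xi>. (b + (\<Sum>i\<in>{1..n}. w i * \<xi> i))\<^sup>2 \<partial>noise n) = b\<^sup>2 + (\<Sum>i\<in>{1..n}. (w i)\<^sup>2)"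
proof -
  interpret prob_space "noise n" by (rule prob_noise)
  let ?I = "{1..n}"
  have e: "(b + (\<Sum>i\<in>?I. w i * \<xi> i))\<^sup>2 = b\<^sup>2 + (\<Sum>i\<in>?I. (2 * b * w i) * \<xi> i)
      + (\<Sum>i\<in>?I. \<Sum>j\<in>?I. (w i * w j) * (\<xi> i * \<xi> j))" for \<xi> :: "nat \<Rightarrow> real"
    by (simp add: power2_eq_square algebra_simps sum_distrib_left sum_distrib_right sum.distrib sum_product)
  have I1: "integrable (noise n) (\<lambda>\<xi>. \<Sum>i\<in>?I. (2 * b * w i) * \<xi> i)"
    using noise_single by (intro Bochner_Integration.integrable_sum integrable_mult_right) auto
  have I2: "integrable (noise n) (\<lambda>\<xi>. \<Sum>i\<in>?I. \<Sum>j\<in>?I. (w i * w j) * (\<xi> i * \<xi> j))"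
    using noise_prod by (intro Bochner_Integration.integrable_sum integrable_mult_right) auto
  have V1: "(\<integral>\<xi>. (\<Sum>i\<in>?I. (2 * b * w i) * \<xi> i) \<partial>noise n) = 0"
    using noise_single by (subst Bochner_Integration.integral_sum) (auto intro: integrable_mult_right)
  have V2: "(\<integral>\<xi>. (\<Sum>i\<in>?I. \<Sum>j\<in>?I. (w i * w j) * (\<xi> i * \<xi> j)) \<partial>noise n) = (\<Sum>i\<in>?I. (w i)\<^sup>2)"
  proof -
    have "(\<integral>\<xi>. (\<Sum>i\<in>?I. \<Sum>j\<in>?I. (w i * w j) * (\<xi> i * \<xi> j)) \<partial>noise n)
        = (\<Sum>i\<in>?I. \<integral>\<xi>. (\<Sum>j\<in>?I. (w i * w j) * (\<xi> i * \<xi> j)) \<partial>noise n)"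
      using noise_prod by (subst Bochner_Integration.integral_sum) (auto intro!: Bochner_Integration.integrable_sum integrable_mult_right)
    also have "\<dots> = (\<Sum>i\<in>?I. \<Sum>j\<in>?I. (w i * w j) * (if i = j then 1 else 0))"
      using noise_prod by (intro sum.cong refl, subst Bochner_Integration.integral_sum) (auto intro!: integrable_mult_right sum.cong)
    also have "\<dots> = (\<Sum>i\<in>?I. (w i)\<^sup>2)"
      by (intro sum.cong refl) (simp add: power2_eq_square if_distrib cong: if_cong)
    finally show ?thesis .
  qed
  have Ib: "integrable (noise n) (\<lambda>\<xi>. b\<^sup>2 + (\<Sum>i\<in>?I. (2 * b * w i) * \<xi> i)
      + (\<Sum>i\<in>?I. \<Sum>j\<in>?I. (w i * w j) * (\<xi> i * \<xi> j)))"
    using I1 I2 by auto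
  have Vb: "(\<integral>\<xi>. b\<^sup>2 + (\<Sum>i\<in>?I. (2 * b * w i) * \<xi> i)
      + (\<Sum>i\<in>?I. \<Sum>j\<in>?I. (w i * w j) * (\<xi> i * \<xi> j)) \<partial>noise n) = b\<^sup>2 + (\<Sum>i\<in>?I. (w i)\<^sup>2)"
    using I1 I2 V1 V2 prob_space by (simp add: Bochner_Integration.integral_add)
  show ?thesis unfolding e using Ib Vb by simp
qed



lemma a_bounds:
  fixes a :: "nat \<Rightarrow> real"
  assumes th: "a \<in> \<Theta>(\<lambda>k. real k powr (- p))" and pos: "\<And>k. k \<ge> 1 \<Longrightarrow> a k > 0"
  obtains c1 c2 where "c1 > 0" "c2 > 0"
    "\<And>k. k \<ge> 1 \<Longrightarrow> c1 * real k powr (- p) \<le> a k \<and> a k \<le> c2 * real k powr (- p)"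
proof -
  from bigthetaD1[OF th] obtain c where c: "c > 0"
    and ev1: "eventually (\<lambda>k. norm (a k) \<le> c * norm (real k powr (- p))) at_top"
    by (elim landau_o.bigE) auto
  from bigthetaD2[OF th] obtain c' where c': "c' > 0"
    and ev2: "eventually (\<lambda>k. norm (a k) \<ge> c' * norm (real k powr (- p))) at_top"
    by (elim landau_omega.bigE) auto
  from eventually_conj[OF ev1 ev2] obtain N where N: "\<And>k. k \<ge> N \<Longrightarrow>
      norm (a k) \<le> c * norm (real k powr (- p)) \<and> norm (a k) \<ge> c' * norm (real k powr (- p))"
    unfolding eventually_at_top_linorder by blast
  define r where "r k = a k / real k powr (- p)" for k
  define S where "S = r ` {1..max N 1}"
  have Sne: "S \<noteq> {}" "finite S" unfolding S_def by auto
  have rpos: "r k > 0" if "k \<ge> 1" for k unfolding r_def using pos[OF that] that by simp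
  define m where "m = Min S"
  define M where "M = Max S"
  have mpos: "m > 0" unfolding m_def using Sne rpos by (subst Min_gr_iff) (auto simp: S_def)
  have r1: "r 1 \<in> S" unfolding S_def by auto
  have Mpos: "M > 0" unfolding M_def using Max_ge[OF Sne(2) r1] rpos[of 1] by linarith
  show ?thesis
  proof (rule that[of "min c' m" "max c M"])
    show "min c' m > 0" "max c M > 0" using c' mpos c Mpos by auto
    fix k :: nat assume k: "k \<ge> 1"
    have kp: "real k powr (- p) > 0" using k by simp
    show "min c' m * real k powr (- p) \<le> a k \<and> a k \<le> max c M * real k powr (- p)"
    proof (cases "k \<ge> N")
      case True
      with N[of k] have "\<bar>a k\<bar> \<le> c * real k powr (- p)" "\<bar>a k\<bar> \<ge> c' * real k powr (- p)" by auto
      moreover have "min c' m * real k powr (- p) \<le> c' * real k powr (- p)"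
        using kp by (intro mult_right_mono) auto
      moreover have "c * real k powr (- p) \<le> max c M * real k powr (- p)"
        using kp by (intro mult_right_mono) auto
      ultimately show ?thesis using pos[OF k] by auto
    next
      case False
      then have kS: "r k \<in> S" unfolding S_def using k by auto
      have "m \<le> r k" "r k \<le> M" unfolding m_def M_def using kS Sne by auto
      then have "m * real k powr (- p) \<le> a k" "a k \<le> M * real k powr (- p)"
        unfolding r_def using kp by (auto simp: field_simps)
      moreover have "min c' m * real k powr (- p) \<le> m * real k powr (- p)"
        using kp by (intro mult_right_mono) auto
      moreover have "M * real k powr (- p) \<le> max c M * real k powr (- p)"
        using kp by (intro mult_right_mono) auto
      ultimately show ?thesis by auto
    qed
  qed
qed



lemma amgm_aux:
  fixes A F w t :: real
  assumes t: "t > 0" and w: "w > 0"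
  shows "\<bar>A * F\<bar> \<le> (t * F\<^sup>2 * w powr 2 + A\<^sup>2 * w powr (-2) / t) / 2"
proof -
  define X where "X = \<bar>F\<bar> * w"
  define Y where "Y = \<bar>A\<bar> / w"
  have XY: "\<bar>A * F\<bar> = X * Y" unfolding X_def Y_def using w by (simp add: abs_mult)
  have X2: "X\<^sup>2 = F\<^sup>2 * w powr 2" unfolding X_def using w by (simp add: power2_eq_square powr_numeral power_mult_distrib)
  have Y2: "Y\<^sup>2 = A\<^sup>2 * w powr (-2)" unfolding Y_def using w
    by (simp add: power2_eq_square powr_minus powr_numeral divide_inverse power_mult_distrib)
  have "0 \<le> (t * X - Y)\<^sup>2" by simp
  then have "2 * t * (X * Y) \<le> t\<^sup>2 * X\<^sup>2 + Y\<^sup>2" by (simp add: power2_eq_square algebra_simps)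
  then have "2 * (X * Y) \<le> t * X\<^sup>2 + Y\<^sup>2 / t" using t
    by (simp add: field_simps power2_eq_square)
  then show ?thesis unfolding XY X2 Y2 by simp
qed

lemma R_bound:
  fixes a f0 :: "nat \<Rightarrow> real" and \<psi> :: "nat \<Rightarrow> real \<Rightarrow> real" and kb :: "nat \<Rightarrow> nat"
  assumes n: "n \<ge> 2" and k: "k \<in> {1..n-1}"
   and orth: "\<And>j. j \<in> {1..n-1} \<Longrightarrow> dip n (\<psi> j) (\<psi> k) = (if j = k then 1 else 0)"
   and als: "\<And>l. l \<ge> 1 \<Longrightarrow> kb l < n \<and> \<bar>dip n (\<psi> (l*n + kb l)) (\<psi> k)\<bar> < Mc \<and>
        (\<forall>j\<in>{l*n..<(l+1)*n}. j \<noteq> l*n + kb l \<longrightarrow> dip n (\<psi> j) (\<psi> k) = 0)"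
   and summ: "\<And>x. x \<in> {0..1} \<Longrightarrow> summable (\<lambda>j. a (Suc j) * f0 (Suc j) * \<psi> (Suc j) x)"
   and apos: "\<And>j. j \<ge> 1 \<Longrightarrow> a j > 0" and abnd: "\<And>j. j \<ge> 1 \<Longrightarrow> a j \<le> c2 * real j powr (-p)"
   and f0S: "(\<lambda>k. (f0 k)\<^sup>2 * real k powr (2*\<beta>)) summable_on {1..}"
   and Sn: "infsum (\<lambda>k. (f0 k)\<^sup>2 * real k powr (2*\<beta>)) {1..} \<le> K\<^sup>2"
   and bp: "\<beta> + p > 1/2" and c2: "c2 > 0"
  shows "\<bar>Udata a \<psi> n f0 (\<lambda>_. 0) k - a k * f0 k\<bar>
     \<le> Mc / 2 * (K\<^sup>2 + c2\<^sup>2 * (\<Sum>l. real (Suc l) powr (-(2*p+2*\<beta>)))) * real n powr (-(p+\<beta>))"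
proof -
  define s where "s = 2*p + 2*\<beta>"
  have s1: "s > 1" unfolding s_def using bp by simp
  define D where "D = Udata a \<psi> n f0 (\<lambda>_. 0) k"
  define g where "g m = a m * f0 m * dip n (\<psi> m) (\<psi> k)" for m
  have Mc: "Mc > 0" using als[of 1] by auto
  have Gs: "(\<lambda>j. g (Suc j)) sums D"
  proof -
    have "(\<lambda>j. (\<Sum>i\<in>{1..n}. a (Suc j) * f0 (Suc j) * \<psi> (Suc j) (real i / real n) * \<psi> k (real i / real n)) / real n)
        sums ((\<Sum>i\<in>{1..n}. Aop a \<psi> f0 (real i / real n) * \<psi> k (real i / real n)) / real n)"
    proof (intro sums_divide sums_sum sums_mult2)
      fix i assume i: "i \<in> {1..n}"
      have "real i / real n \<in> {0..1}" using i by auto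
      from summ[OF this] show "(\<lambda>j. a (Suc j) * f0 (Suc j) * \<psi> (Suc j) (real i / real n)) sums Aop a \<psi> f0 (real i / real n)"
        unfolding Aop_def by (rule summable_sums)
    qed
    moreover have "(\<lambda>j. (\<Sum>i\<in>{1..n}. a (Suc j) * f0 (Suc j) * \<psi> (Suc j) (real i / real n) * \<psi> k (real i / real n)) / real n)
        = (\<lambda>j. g (Suc j))"
      unfolding g_def dip_def by (simp add: sum_distrib_left mult.assoc)
    moreover have "D = (\<Sum>i\<in>{1..n}. Aop a \<psi> f0 (real i / real n) * \<psi> k (real i / real n)) / real n"
      unfolding D_def Udata_def by simp
    ultimately show ?thesis by simp
  qed
  have init: "(\<Sum>i<n-1. g (Suc i)) = a k * f0 k"
  proof -
    have "(\<Sum>i<n-1. g (Suc i)) = (\<Sum>j\<in>{Suc 0..n-1}. g j)" by (rule sum.atLeast1_atMost_eq[symmetric])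
    also have "\<dots> = (\<Sum>j\<in>{Suc 0..n-1}. if j = k then a k * f0 k else 0)"
      by (rule sum.cong[OF refl]) (auto simp: g_def orth)
    also have "\<dots> = a k * f0 k" using k by simp
    finally show ?thesis .
  qed
  have tl: "(\<lambda>i. g (i + n)) sums (D - a k * f0 k)"
  proof -
    have "(\<lambda>i. g (Suc (i + (n-1)))) sums (D - (\<Sum>i<n-1. g (Suc i)))"
      using sums_split_initial_segment[OF Gs, of "n-1"] by simp
    moreover have "Suc (i + (n-1)) = i + n" for i using n by simp
    ultimately show ?thesis unfolding init by simp
  qed
  define j where "j l = (Suc l) * n + kb (Suc l)" for l
  have blk: "(\<Sum>i\<in>{l*n..<l*n+n}. g (i + n)) = g (j l)" for l
  proof -
    have "(\<Sum>i\<in>{l*n..<l*n+n}. g (i + n)) = (\<Sum>m\<in>{l*n+n..<l*n+n+n}. g m)"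
      by (rule sum.shift_bounds_nat_ivl[symmetric])
    also have "{l*n+n..<l*n+n+n} = {Suc l * n..<(Suc l + 1) * n}" by (simp add: algebra_simps)
    also have "(\<Sum>m\<in>{Suc l * n..<(Suc l + 1) * n}. g m) = g (j l)"
    proof -
      have A: "kb (Suc l) < n \<and> \<bar>dip n (\<psi> (Suc l*n + kb (Suc l))) (\<psi> k)\<bar> < Mc \<and>
        (\<forall>j\<in>{Suc l*n..<(Suc l+1)*n}. j \<noteq> Suc l*n + kb (Suc l) \<longrightarrow> dip n (\<psi> j) (\<psi> k) = 0)"
        using als[of "Suc l"] by simp
      have jin: "j l \<in> {Suc l * n..<(Suc l + 1) * n}" unfolding j_def using A by auto
      have "(\<Sum>m\<in>{Suc l * n..<(Suc l + 1) * n}. g m) = g (j l) + (\<Sum>m\<in>{Suc l * n..<(Suc l + 1) * n} - {j l}. g m)"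
        using jin by (subst sum.remove) auto
      also have "(\<Sum>m\<in>{Suc l * n..<(Suc l + 1) * n} - {j l}. g m) = 0"
        using A unfolding g_def j_def by (intro sum.neutral) auto
      finally show ?thesis by simp
    qed
    finally show ?thesis .
  qed
  have Rs: "(\<lambda>l. g (j l)) sums (D - a k * f0 k)"
    using sums_group[OF tl, of n] n blk by simp
  define t where "t = real n powr (-(p+\<beta>))"
  have t: "t > 0" unfolding t_def using n by simp
  define h where "h m = (f0 m)\<^sup>2 * real m powr (2*\<beta>)" for m
  define F where "F l = h (j l)" for l
  define E where "E l = c2\<^sup>2 * real n powr (-s) * real (Suc l) powr (-s)" for l
  have jge: "j l \<ge> Suc l * n" for l unfolding j_def by simp
  have jpos: "j l \<ge> 1" for l
  proof -
    have "n \<le> Suc l * n" by simp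
    then show ?thesis using jge[of l] n by linarith
  qed
  have gb: "\<bar>g (j l)\<bar> \<le> Mc / 2 * (t * F l + E l / t)" for l
  proof -
    have jl: "real (j l) > 0" using jpos[of l] by simp
    have d: "\<bar>dip n (\<psi> (j l)) (\<psi> k)\<bar> \<le> Mc" using als[of "Suc l"] unfolding j_def by auto
    have "\<bar>g (j l)\<bar> = \<bar>a (j l) * f0 (j l)\<bar> * \<bar>dip n (\<psi> (j l)) (\<psi> k)\<bar>" unfolding g_def by (simp add: abs_mult)
    also have "\<dots> \<le> \<bar>a (j l) * f0 (j l)\<bar> * Mc" using d by (intro mult_left_mono) auto
    also have "\<bar>a (j l) * f0 (j l)\<bar> \<le> (t * F l + (a (j l))\<^sup>2 * real (j l) powr (-2*\<beta>) / t) / 2"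
      using amgm_aux[OF t, of "real (j l) powr \<beta>" "a (j l)" "f0 (j l)"] jl
      by (simp add: F_def h_def powr_powr mult.commute)
    also have "(a (j l))\<^sup>2 * real (j l) powr (-2*\<beta>) \<le> E l"
    proof -
      have a0: "0 < a (j l)" using apos[OF jpos[of l]] .
      have "(a (j l))\<^sup>2 \<le> (c2 * real (j l) powr (-p))\<^sup>2"
        using abnd[OF jpos[of l]] a0 by (intro power_mono) auto
      also have "\<dots> = c2\<^sup>2 * real (j l) powr (-2*p)"
        using jl by (simp add: power_mult_distrib powr_powr[symmetric] powr_realpow[symmetric] power2_eq_square powr_add[symmetric])
      finally have "(a (j l))\<^sup>2 * real (j l) powr (-2*\<beta>) \<le> c2\<^sup>2 * real (j l) powr (-2*p) * real (j l) powr (-2*\<beta>)"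
        by (intro mult_right_mono) auto
      also have "\<dots> = c2\<^sup>2 * real (j l) powr (-s)" unfolding s_def using jl by (simp add: powr_add[symmetric] mult.assoc)
      also have "\<dots> \<le> c2\<^sup>2 * (real (Suc l) * real n) powr (-s)"
      proof -
        have "real (Suc l) * real n \<le> real (j l)" using jge[of l] by (metis of_nat_le_iff of_nat_mult)
        then show ?thesis using n s1 by (intro mult_left_mono powr_mono2') auto
      qed
      also have "\<dots> = E l" unfolding E_def using n by (simp add: powr_mult)
      finally show ?thesis .
    qed
    then have "(t * F l + (a (j l))\<^sup>2 * real (j l) powr (-2*\<beta>) / t) / 2 \<le> (t * F l + E l / t) / 2"
      using t by (simp add: divide_right_mono)
    finally show ?thesis using Mc by (simp add: mult.commute)
  qed
  have jinj: "inj j"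
  proof (rule strict_mono_imp_inj_on, rule strict_monoI)
    fix l l' :: nat assume "l < l'"
    then have "Suc l + 1 \<le> Suc l'" by simp
    then have "(Suc l + 1) * n \<le> Suc l' * n" by (rule mult_right_mono) simp
    moreover have "j l < (Suc l + 1) * n" using als[of "Suc l"] unfolding j_def by auto
    ultimately show "j l < j l'" using jge[of l'] by linarith
  qed
  have h0: "h m \<ge> 0" for m unfolding h_def by simp
  have hsum: "h summable_on range j"
    by (rule summable_on_subset[OF f0S[folded h_def]]) (use jpos in auto)
  have Fsum': "F summable_on UNIV" using hsum summable_on_reindex[OF jinj[unfolded inj_on_def[symmetric]]] 
    unfolding F_def by (simp add: comp_def summable_on_reindex[OF jinj])
  have Fsum: "summable F" using Fsum' h0 unfolding F_def by (subst summable_on_UNIV_nonneg_real_iff[symmetric]) auto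
  have FK: "suminf F \<le> K\<^sup>2"
  proof -
    have "(F has_sum suminf F) UNIV"
      by (rule sums_nonneg_imp_has_sum[OF summable_sums[OF Fsum]]) (simp add: F_def h0)
    then have "suminf F = infsum F UNIV" by (simp add: infsumI)
    also have "\<dots> = infsum h (range j)" unfolding F_def using infsum_reindex[OF jinj, of h] by (simp add: comp_def)
    also have "\<dots> \<le> infsum h {1..}"
      by (rule infsum_mono_neutral[OF hsum f0S[folded h_def]]) (use jpos h0 in auto)
    also have "\<dots> \<le> K\<^sup>2" using Sn unfolding h_def .
    finally show ?thesis .
  qed
  define Z where "Z = (\<Sum>l. real (Suc l) powr (-s))"
  have Zs: "summable (\<lambda>l. real (Suc l) powr (-s))"
  proof -
    have "summable (\<lambda>l. real l powr (-s))" using s1 by (subst summable_real_powr_iff) simp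
    then show ?thesis by (subst summable_Suc_iff)
  qed
  have Esum: "summable E" unfolding E_def using Zs by (rule summable_mult)
  have Ev: "suminf E = c2\<^sup>2 * real n powr (-s) * Z" unfolding E_def Z_def using Zs by (rule suminf_mult)
  have Bs: "summable (\<lambda>l. Mc / 2 * (t * F l + E l / t))"
    using Fsum Esum by (intro summable_mult summable_add summable_divide) auto
  have Babs: "summable (\<lambda>l. norm (g (j l)))"
    by (rule summable_comparison_test'[OF Bs, of 0]) (use gb in auto)
  have "\<bar>D - a k * f0 k\<bar> = norm (suminf (\<lambda>l. g (j l)))" using sums_unique[OF Rs] by simp
  also have "\<dots> \<le> (\<Sum>l. norm (g (j l)))" by (rule summable_norm[OF Babs])
  also have "\<dots> \<le> (\<Sum>l. Mc / 2 * (t * F l + E l / t))"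
    by (rule suminf_le[OF _ Babs Bs]) (use gb in auto)
  also have "\<dots> = Mc / 2 * (t * suminf F + suminf E / t)"
  proof -
    have "(\<lambda>l. Mc / 2 * (t * F l + E l / t)) sums (Mc / 2 * (t * suminf F + suminf E / t))"
      using Fsum Esum by (intro sums_mult sums_add sums_divide summable_sums)
    then show ?thesis by (simp add: sums_iff)
  qed
  also have "\<dots> \<le> Mc / 2 * (t * K\<^sup>2 + suminf E / t)"
    using FK t Mc by (intro mult_left_mono add_right_mono) auto
  also have "suminf E / t = c2\<^sup>2 * Z * t"
  proof -
    have "real n powr (-s) = t * t" unfolding t_def s_def using n by (simp add: powr_add[symmetric])
    then show ?thesis unfolding Ev using t by (simp add: field_simps)
  qed
  also have "Mc / 2 * (t * K\<^sup>2 + c2\<^sup>2 * Z * t) = Mc / 2 * (K\<^sup>2 + c2\<^sup>2 * Z) * t" by (simp add: algebra_simps)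
  finally show ?thesis unfolding D_def t_def Z_def s_def .
qed



lemma one_minus_powr_ge:
  fixes y s :: real
  assumes y: "0 < y" "y < 1" and s: "s > 0"
  shows "(1 - y) powr (-s) \<ge> 1 + s * y"
proof -
  have l: "ln (1 - y) \<le> - y" using ln_le_minus_one[of "1 - y"] y by simp
  have "(1 - y) powr (-s) = exp (-s * ln (1 - y))" using y by (simp add: powr_def)
  also have "\<dots> \<ge> 1 + (-s * ln (1 - y))" by (rule exp_ge_add_one_self)
  finally have "(1 - y) powr (-s) \<ge> 1 - s * ln (1 - y)" by simp
  moreover have "s * y \<le> s * (- ln (1 - y))" using l s by (intro mult_left_mono) auto
  then have "- s * ln (1 - y) \<ge> s * y" by simp
  ultimately show ?thesis by linarith
qed

lemma tele_step:
  fixes k s :: real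
  assumes s: "s > 0" and k: "k \<ge> 1"
  shows "(k + 1) powr (-1 - s) \<le> (k powr (-s) - (k + 1) powr (-s)) / s"
proof -
  define y where "y = 1 / (k + 1)"
  have y: "0 < y" "y < 1" unfolding y_def using k by auto
  have ky: "k = (k + 1) * (1 - y)" unfolding y_def using k by (simp add: field_simps)
  have "k powr (-s) = (k + 1) powr (-s) * (1 - y) powr (-s)"
    using k y by (subst ky) (simp add: powr_mult)
  also have "\<dots> \<ge> (k + 1) powr (-s) * (1 + s * y)"
    using one_minus_powr_ge[OF y s] by (intro mult_left_mono) auto
  finally have "k powr (-s) - (k + 1) powr (-s) \<ge> s * ((k + 1) powr (-s) * y)"
    by (simp add: algebra_simps)
  moreover have "(k + 1) powr (-s) * y = (k + 1) powr (-1 - s)"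
  proof -
    have e: "-1 - s = -s + -1" by simp
    have "(k + 1) powr (-1 - s) = (k + 1) powr (-s) * (k + 1) powr (-1)" unfolding e by (rule powr_add)
    moreover have B: "(k + 1) powr (-1) = y" unfolding y_def using k by (simp add: powr_minus_divide)
    ultimately show ?thesis by (simp only: B)
  qed
  ultimately show ?thesis using s by (simp add: field_simps)
qed

lemma tele_sum:
  fixes s :: real and N M :: nat
  assumes s: "s > 0" and N: "N \<ge> 1"
  shows "(\<Sum>k\<in>{N<..M}. real k powr (-1 - s)) \<le> (real N powr (-s) - real (max N M) powr (-s)) / s"
proof (induction M)
  case 0 then show ?case using N by simp
next
  case (Suc M)
  show ?case
  proof (cases "Suc M \<le> N")
    case True
    then have "{N<..Suc M} = {}" by auto
    then show ?thesis using True by (simp add: max_def)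
  next
    case False
    then have MN: "M \<ge> N" by simp
    have "{N<..Suc M} = insert (Suc M) {N<..M}" using MN by auto
    then have "(\<Sum>k\<in>{N<..Suc M}. real k powr (-1 - s)) = real (Suc M) powr (-1 - s) + (\<Sum>k\<in>{N<..M}. real k powr (-1 - s))"
      by simp
    also have "\<dots> \<le> (real M powr (-s) - real (Suc M) powr (-s)) / s + (real N powr (-s) - real M powr (-s)) / s"
      using Suc.IH tele_step[OF s, of "real M"] MN N by (simp add: max_def add.commute)
    also have "\<dots> = (real N powr (-s) - real (max N (Suc M)) powr (-s)) / s"
      using MN s by (simp add: max_def field_simps)
    finally show ?thesis .
  qed
qed

lemma tele_bound:
  fixes s :: real and N M :: nat
  assumes s: "s > 0" and N: "N \<ge> 1"
  shows "(\<Sum>k\<in>{N<..M}. real k powr (-1 - s)) \<le> real N powr (-s) / s"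
proof -
  have "(real N powr (-s) - real (max N M) powr (-s)) / s \<le> real N powr (-s) / s"
    using s by (intro divide_right_mono) auto
  then show ?thesis using tele_sum[OF s N, of M] by linarith
qed

lemma E1_bound:
  fixes c x k Dd \<beta> y :: real
  assumes c: "c > 0" and x: "x \<ge> 1" and k: "k \<ge> 1" and Dd: "Dd > 0" and \<beta>: "\<beta> > 0"
    and y: "y \<ge> c * x * k powr (-Dd)"
  shows "k powr (-\<beta>) / (1 + y) \<le> max 1 (1/c) * x powr (- min (\<beta>/Dd) 1)"
proof -
  define E where "E = x powr (- min (\<beta>/Dd) 1)"
  have E1: "x powr (-(\<beta>/Dd)) \<le> E" unfolding E_def using x by (intro powr_mono) auto
  have E2: "x powr (-1) \<le> E" unfolding E_def using x by (intro powr_mono) auto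
  have E0: "E \<ge> 0" unfolding E_def by simp
  have "c * x * k powr (-Dd) \<ge> 0" using c x by simp
  then have y0: "y \<ge> 0" using y by linarith
  have kp: "k powr (-\<beta>) \<ge> 0" by simp
  have Em: "E \<le> max 1 (1/c) * E" using E0 by (simp add: mult_le_cancel_right1)
  have "k powr (-\<beta>) / (1 + y) \<le> max 1 (1/c) * E"
  proof (cases "k powr Dd \<ge> x")
    case True
    have "k powr (-\<beta>) = (k powr Dd) powr (-(\<beta>/Dd))" using Dd k by (simp add: powr_powr)
    also have "\<dots> \<le> x powr (-(\<beta>/Dd))" using True x Dd \<beta> by (intro powr_mono2') auto
    finally have "k powr (-\<beta>) \<le> E" using E1 by linarith
    moreover have "k powr (-\<beta>) / (1 + y) \<le> k powr (-\<beta>) / 1" using y0 kp by (intro divide_left_mono) auto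
    ultimately show ?thesis using Em by linarith
  next
    case False
    have kD: "k powr (-Dd) = 1 / k powr Dd" using k by (simp add: powr_minus_divide)
    have kDp: "k powr Dd > 0" using k by simp
    have ypos: "c * x * k powr (-Dd) > 0" using c x k by simp
    have "k powr (-\<beta>) / (1 + y) \<le> k powr (-\<beta>) / (c * x * k powr (-Dd))"
      using y ypos kp by (intro divide_left_mono) auto
    also have "\<dots> = k powr (Dd - \<beta>) / (c * x)"
      using k c x kDp by (simp add: kD powr_diff field_simps powr_minus_divide)
    also have "\<dots> \<le> max 1 (1/c) * E"
    proof (cases "\<beta> \<le> Dd")
      case True
      have "k powr (Dd - \<beta>) = (k powr Dd) powr ((Dd - \<beta>)/Dd)" using Dd k by (simp add: powr_powr)
      also have "\<dots> \<le> x powr ((Dd - \<beta>)/Dd)" using False True Dd kDp by (intro powr_mono2) auto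
      finally have "k powr (Dd - \<beta>) / (c * x) \<le> x powr ((Dd - \<beta>)/Dd) / (c * x)"
        using c x by (intro divide_right_mono) auto
      also have "x powr ((Dd - \<beta>)/Dd) / (c * x) = (1/c) * x powr (-(\<beta>/Dd))"
      proof -
        have e: "(Dd - \<beta>)/Dd = 1 + -(\<beta>/Dd)" using Dd by (simp add: diff_divide_distrib)
        have "x powr (1 + -(\<beta>/Dd)) = x powr 1 * x powr (-(\<beta>/Dd))" by (rule powr_add)
        then have "x powr ((Dd - \<beta>)/Dd) = x * x powr (-(\<beta>/Dd))" unfolding e using x by simp
        then show ?thesis using x c by (simp add: field_simps)
      qed
      also have "\<dots> \<le> max 1 (1/c) * E" using E1 c E0
        by (intro mult_mono) auto
      finally show ?thesis .
    next
      case False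
      have "k powr (Dd - \<beta>) \<le> k powr 0" using False k by (intro powr_mono) auto
      then have "k powr (Dd - \<beta>) \<le> 1" using k by simp
      then have "k powr (Dd - \<beta>) / (c * x) \<le> 1 / (c * x)" using c x by (intro divide_right_mono) auto
      also have "1 / (c * x) = (1/c) * x powr (-1)" using x by (simp add: powr_minus_divide)
      also have "\<dots> \<le> max 1 (1/c) * E" using E2 c E0 by (intro mult_mono) auto
      finally show ?thesis .
    qed
    finally show ?thesis .
  qed
  then show ?thesis unfolding E_def .
qed



lemma nbeta_bound:
  fixes n :: nat and \<rho> \<alpha> \<beta> p D x :: real
  assumes n: "n \<ge> 1" and \<rho>: "\<rho> > 0" and \<alpha>: "\<alpha> > 0" and \<beta>: "\<beta> > 0" and p: "p > 0"
    and D_def: "D = 2*\<alpha>+2*p+1" and x_def: "x = \<rho>\<^sup>2 * real n"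
  shows "real n powr (-\<beta>) \<le> max (x powr (- min (\<beta> / D) 1)) (\<rho> * x powr (- (\<alpha> / D)))"
proof -
  have D: "D > 1" unfolding D_def using \<alpha> p by simp
  have x: "x > 0" unfolding x_def using \<rho> n by simp
  have nr: "real n \<ge> 1" using n by simp
  have nb1: "real n powr (-\<beta>) \<le> 1"
  proof -
    have "real n powr (-\<beta>) \<le> real n powr 0" using nr \<beta> by (intro powr_mono) auto
    then show ?thesis using nr by simp
  qed
  show ?thesis
  proof (cases "x \<le> real n powr D")
    case True
    show ?thesis
    proof (cases "\<beta> \<le> D")
      case True2: True
      have "real n powr (-\<beta>) = (real n powr D) powr (-(\<beta>/D))" using D nr by (simp add: powr_powr)
      also have "\<dots> \<le> x powr (-(\<beta>/D))" using True x D \<beta> by (intro powr_mono2') auto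
      also have "\<dots> = x powr (- min (\<beta>/D) 1)" using True2 D by simp
      finally show ?thesis by simp
    next
      case False
      have "real n powr (-\<beta>) \<le> real n powr (-D)" using False nr by (intro powr_mono) auto
      also have "\<dots> = (real n powr D) powr (-1)" using nr by (simp add: powr_powr powr_minus_divide)
      also have "\<dots> \<le> x powr (-1)" using True x by (intro powr_mono2') auto
      also have "\<dots> = x powr (- min (\<beta>/D) 1)" using False D by simp
      finally show ?thesis by simp
    qed
  next
    case False
    define z where "z = \<rho> * x powr (-(\<alpha>/D))"
    have z0: "z \<ge> 0" unfolding z_def using \<rho> by simp
    have e: "1 - 2*\<alpha>/D = (2*p+1)/D" unfolding D_def using D D_def by (simp add: field_simps)
    have "z\<^sup>2 = \<rho>\<^sup>2 * (x powr (-(\<alpha>/D)))\<^sup>2" unfolding z_def by (simp add: power_mult_distrib)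
    also have "(x powr (-(\<alpha>/D)))\<^sup>2 = x powr (-(2*\<alpha>/D))" using x by (simp add: powr_realpow[symmetric] powr_powr mult.commute)
    also have "\<rho>\<^sup>2 = x / real n" unfolding x_def using n by simp
    also have "x / real n * x powr (-(2*\<alpha>/D)) = x powr (1 - 2*\<alpha>/D) / real n"
      using x by (simp add: powr_diff powr_minus_divide)
    also have "\<dots> = x powr ((2*p+1)/D) / real n" unfolding e ..
    finally have z2: "z\<^sup>2 = x powr ((2*p+1)/D) / real n" .
    have "real n \<le> real n powr (2*p+1)"
    proof -
      have "real n powr 1 \<le> real n powr (2*p+1)" using nr p by (intro powr_mono) auto
      then show ?thesis using nr by simp
    qed
    also have "real n powr (2*p+1) = (real n powr D) powr ((2*p+1)/D)" using D nr by (simp add: powr_powr)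
    also have "\<dots> \<le> x powr ((2*p+1)/D)" using False nr D p by (intro powr_mono2) auto
    finally have "1 \<le> z\<^sup>2" unfolding z2 using nr by simp
    then have "1 \<le> z" using z0 by (metis abs_of_nonneg one_le_power real_sqrt_abs real_sqrt_ge_one)
    then show ?thesis using nb1 unfolding z_def by simp
  qed
qed

lemma floor_half:
  fixes t :: real assumes t: "t \<ge> 1"
  shows "real (nat \<lfloor>t\<rfloor>) \<ge> t / 2" "real (nat \<lfloor>t\<rfloor>) \<le> t" "nat \<lfloor>t\<rfloor> \<ge> 1"
proof -
  have f1: "of_int \<lfloor>t\<rfloor> \<ge> t - 1" "of_int \<lfloor>t\<rfloor> \<le> t" by linarith+
  have f2: "\<lfloor>t\<rfloor> \<ge> 1" using t by linarith
  have r: "real (nat \<lfloor>t\<rfloor>) = of_int \<lfloor>t\<rfloor>" using f2 by simp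
  show "real (nat \<lfloor>t\<rfloor>) \<ge> t / 2"
  proof (cases "t \<ge> 2")
    case True then show ?thesis unfolding r using f1 by linarith
  next
    case False then show ?thesis unfolding r using f2 by linarith
  qed
  show "real (nat \<lfloor>t\<rfloor>) \<le> t" unfolding r using f1 by linarith
  show "nat \<lfloor>t\<rfloor> \<ge> 1" using f2 by linarith
qed

lemma V_bound:
  fixes a :: "nat \<Rightarrow> real" and n :: nat and \<rho> \<alpha> p c1 D x :: real and lam :: "nat \<Rightarrow> real"
  assumes c1: "c1 > 0" and ab: "\<And>k. k \<ge> 1 \<Longrightarrow> c1 * real k powr (-p) \<le> a k"
    and \<rho>: "\<rho> > 0" and \<alpha>: "\<alpha> > 0" and p: "p > 0" and n: "n \<ge> 1"
    and D_def: "D = 2*\<alpha>+2*p+1" and x_def: "x = \<rho>\<^sup>2 * real n" and x1: "x \<ge> 1"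
    and lam_def: "\<And>k. lam k = \<rho>\<^sup>2 * real k powr (-1-2*\<alpha>)"
  shows "(\<Sum>k\<in>{1..<n}. post_var a lam n k) \<le> (1/c1\<^sup>2 + 2 powr (2*\<alpha>) / (2*\<alpha>)) * (\<rho>\<^sup>2 * x powr (-(2*\<alpha>/D)))"
proof -
  have D: "D > 1" unfolding D_def using \<alpha> p by simp
  define t where "t = x powr (1/D)"
  have t1: "t \<ge> 1" unfolding t_def using x1 D by (simp add: ge_one_powr_ge_zero)
  define N where "N = nat \<lfloor>t\<rfloor>"
  have N1: "N \<ge> 1" and Nt: "real N \<le> t" and Nt2: "real N \<ge> t / 2" unfolding N_def using floor_half[OF t1] by auto
  define A where "A k = \<rho>\<^sup>2 * real k powr (2*p) / (c1\<^sup>2 * x)" for k :: nat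
  define B where "B k = \<rho>\<^sup>2 * real k powr (-1-2*\<alpha>)" for k :: nat
  have A0: "A k \<ge> 0" for k unfolding A_def using c1 x1 by simp
  have B0: "B k \<ge> 0" for k unfolding B_def by simp
  have pvb: "post_var a lam n k \<le> (if k \<le> N then A k else B k)" if k: "k \<in> {1..<n}" for k
  proof -
    have k1: "k \<ge> 1" and kn: "k < n" using k by auto
    have kr: "real k \<ge> 1" using k1 by simp
    have lp: "lam k > 0" unfolding lam_def using \<rho> k1 by simp
    have ap: "a k \<ge> c1 * real k powr (-p)" using ab[OF k1] .
    have ap0: "c1 * real k powr (-p) > 0" using c1 k1 by simp
    have apos: "a k > 0" using ap ap0 by linarith
    have pv: "post_var a lam n k = lam k / (real n * (a k)\<^sup>2 * lam k + 1)" using kn by (simp add: post_var_def)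
    have npos: "real n * (a k)\<^sup>2 * lam k > 0" using n apos lp by simp
    have pv1: "post_var a lam n k \<le> lam k"
      unfolding pv using lp npos by (simp add: divide_le_eq)
    have "post_var a lam n k \<le> lam k / (real n * (a k)\<^sup>2 * lam k)"
      unfolding pv using lp npos by (intro divide_left_mono) auto
    also have "\<dots> = 1 / (real n * (a k)\<^sup>2)" using lp by simp
    also have "\<dots> \<le> 1 / (real n * (c1 * real k powr (-p))\<^sup>2)"
      using ap ap0 n k1 by (intro divide_left_mono mult_left_mono power_mono mult_pos_pos) auto
    also have "\<dots> = A k"
    proof -
      have "(c1 * real k powr (-p))\<^sup>2 = c1\<^sup>2 * real k powr (-2*p)"
        using kr by (simp add: power_mult_distrib powr_realpow[symmetric] powr_powr mult.commute)
      moreover have "real k powr (-2*p) = 1 / real k powr (2*p)" using kr by (simp add: powr_minus_divide)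
      moreover have "\<rho>\<^sup>2 / x = 1 / real n" unfolding x_def using \<rho> n by simp
      ultimately show ?thesis unfolding A_def using c1 n \<rho> x1 kr by (simp add: field_simps)
    qed
    finally have pv2: "post_var a lam n k \<le> A k" .
    show ?thesis using pv1 pv2 unfolding B_def lam_def by simp
  qed
  have "(\<Sum>k\<in>{1..<n}. post_var a lam n k) \<le> (\<Sum>k\<in>{1..<n}. if k \<le> N then A k else B k)"
    by (rule sum_mono) (rule pvb)
  also have "\<dots> = (\<Sum>k\<in>{1..<n} \<inter> {k. k \<le> N}. A k) + (\<Sum>k\<in>{1..<n} \<inter> - {k. k \<le> N}. B k)"
    by (rule sum.If_cases) simp
  also have "(\<Sum>k\<in>{1..<n} \<inter> {k. k \<le> N}. A k) \<le> (\<Sum>k\<in>{1..N}. A k)"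
    by (rule sum_mono2) (use A0 in auto)
  also have "(\<Sum>k\<in>{1..<n} \<inter> - {k. k \<le> N}. B k) \<le> (\<Sum>k\<in>{N<..n}. B k)"
    by (rule sum_mono2) (use B0 in auto)
  also have "(\<Sum>k\<in>{1..N}. A k) \<le> \<rho>\<^sup>2 * x powr (-(2*\<alpha>/D)) / c1\<^sup>2"
  proof -
    have "(\<Sum>k\<in>{1..N}. A k) \<le> of_nat (card {1..N}) * (\<rho>\<^sup>2 * real N powr (2*p) / (c1\<^sup>2 * x))"
    proof (rule sum_bounded_above)
      fix k assume k: "k \<in> {1..N}"
      have "real k powr (2*p) \<le> real N powr (2*p)" using k p by (intro powr_mono2) auto
      then show "A k \<le> \<rho>\<^sup>2 * real N powr (2*p) / (c1\<^sup>2 * x)" unfolding A_def using c1 x1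
        by (intro divide_right_mono mult_left_mono) auto
    qed
    also have "\<dots> = \<rho>\<^sup>2 * (real N * real N powr (2*p)) / (c1\<^sup>2 * x)" by simp
    also have "real N * real N powr (2*p) = real N powr (2*p+1)" using N1 by (simp add: powr_add)
    also have "real N powr (2*p+1) \<le> t powr (2*p+1)" using Nt p by (intro powr_mono2) auto
    also have "t powr (2*p+1) = x powr ((2*p+1)/D)" unfolding t_def using x1 by (simp add: powr_powr)
    also have "x powr ((2*p+1)/D) = x * x powr (-(2*\<alpha>/D))"
    proof -
      have e: "(2*p+1)/D = 1 + -(2*\<alpha>/D)" unfolding D_def using D D_def by (simp add: field_simps)
      have "x powr (1 + -(2*\<alpha>/D)) = x powr 1 * x powr (-(2*\<alpha>/D))" by (rule powr_add)
      then show ?thesis unfolding e using x1 by simp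
    qed
    finally show ?thesis using x1 c1 \<rho> by (simp add: divide_right_mono mult_left_mono field_simps)
  qed
  also have "(\<Sum>k\<in>{N<..n}. B k) \<le> \<rho>\<^sup>2 * (2 powr (2*\<alpha>) / (2*\<alpha>)) * x powr (-(2*\<alpha>/D))"
  proof -
    have "(\<Sum>k\<in>{N<..n}. B k) = \<rho>\<^sup>2 * (\<Sum>k\<in>{N<..n}. real k powr (-1 - 2*\<alpha>))"
      unfolding B_def by (simp add: sum_distrib_left)
    also have "\<dots> \<le> \<rho>\<^sup>2 * (real N powr (-(2*\<alpha>)) / (2*\<alpha>))"
      using tele_bound[of "2*\<alpha>" N n] \<alpha> N1 by (intro mult_left_mono) auto
    also have "real N powr (-(2*\<alpha>)) \<le> (t / 2) powr (-(2*\<alpha>))"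
      using Nt2 t1 \<alpha> by (intro powr_mono2') auto
    also have "(t / 2) powr (-(2*\<alpha>)) = 2 powr (2*\<alpha>) * x powr (-(2*\<alpha>/D))"
      unfolding t_def using x1 by (simp add: powr_divide powr_powr powr_minus_divide)
    finally show ?thesis using \<alpha> \<rho> by (simp add: divide_right_mono mult_left_mono field_simps)
  qed
  finally show ?thesis by (simp add: algebra_simps add_divide_distrib)
qed



definition cc :: "(nat \<Rightarrow> real) \<Rightarrow> (nat \<Rightarrow> real) \<Rightarrow> nat \<Rightarrow> nat \<Rightarrow> real" where
  "cc a lam n k = real n * a k * lam k / (real n * (a k)\<^sup>2 * lam k + 1)"

lemma W_bound:
  fixes a f0 :: "nat \<Rightarrow> real" and n :: nat and \<rho> \<alpha> \<beta> p c1 D x E K :: real and lam :: "nat \<Rightarrow> real"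
  assumes c1: "c1 > 0" and ab: "\<And>k. k \<ge> 1 \<Longrightarrow> c1 * real k powr (-p) \<le> a k"
    and \<rho>: "\<rho> > 0" and \<alpha>: "\<alpha> > 0" and \<beta>: "\<beta> > 0" and p: "p > 0" and n: "n \<ge> 1"
    and D_def: "D = 2*\<alpha>+2*p+1" and x_def: "x = \<rho>\<^sup>2 * real n" and x1: "x \<ge> 1"
    and lam_def: "\<And>k. lam k = \<rho>\<^sup>2 * real k powr (-1-2*\<alpha>)"
    and f0S: "inS \<beta> f0" and SK: "Snorm \<beta> f0 \<le> K"
    and E_def: "E = max (x powr (- min (\<beta> / D) 1)) (\<rho> * x powr (- (\<alpha> / D)))"
  shows "(\<Sum>k\<in>{1..<n}. (f0 k)\<^sup>2 / (real n * (a k)\<^sup>2 * lam k + 1)\<^sup>2) + infsum (\<lambda>k. (f0 k)\<^sup>2) {n..}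
     \<le> (max 1 (1/c1\<^sup>2))\<^sup>2 * E\<^sup>2 * K\<^sup>2"
proof -
  have D: "D > 0" unfolding D_def using \<alpha> p by simp
  define m where "m = max 1 (1/c1\<^sup>2)"
  have m1: "m \<ge> 1" unfolding m_def by simp
  define C where "C = m\<^sup>2 * E\<^sup>2"
  have E0: "E \<ge> 0" unfolding E_def using \<rho> by (simp add: le_max_iff_disj)
  have C0: "C \<ge> 0" unfolding C_def by simp
  define h where "h k = (f0 k)\<^sup>2 * real k powr (2*\<beta>)" for k
  have sq: "(\<lambda>k. (f0 k)\<^sup>2) summable_on {1..}" and hs: "h summable_on {1..}"
    using f0S unfolding inS_def h_def by auto
  have sub: "{n..} \<subseteq> {1..}" using n by auto
  have w1: "1 / (real n * (a k)\<^sup>2 * lam k + 1)\<^sup>2 \<le> C * real k powr (2*\<beta>)" if k: "k \<in> {1..<n}" for k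
  proof -
    have k1: "k \<ge> 1" using k by simp
    have kr: "real k \<ge> 1" using k1 by simp
    have ap0: "c1 * real k powr (-p) > 0" using c1 k1 by simp
    have ap: "a k \<ge> c1 * real k powr (-p)" using ab[OF k1] .
    have lp: "lam k \<ge> 0" unfolding lam_def by simp
    define y where "y = real n * (a k)\<^sup>2 * lam k"
    have y0: "y \<ge> 0" unfolding y_def using lp by simp
    have "y \<ge> real n * (c1 * real k powr (-p))\<^sup>2 * lam k"
      unfolding y_def using ap ap0 lp by (intro mult_right_mono mult_left_mono power_mono) auto
    also have "real n * (c1 * real k powr (-p))\<^sup>2 * lam k = c1\<^sup>2 * x * real k powr (-D)"
    proof -
      have "(c1 * real k powr (-p))\<^sup>2 = c1\<^sup>2 * real k powr (-2*p)"
        using kr by (simp add: power_mult_distrib powr_realpow[symmetric] powr_powr mult.commute)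
      moreover have "real k powr (-2*p) * real k powr (-1-2*\<alpha>) = real k powr (-D)"
        unfolding D_def using kr by (simp add: powr_add[symmetric] algebra_simps)
      ultimately show ?thesis unfolding lam_def x_def
        by (simp add: algebra_simps) (metis (no_types, lifting) mult.assoc mult.left_commute)
    qed
    finally have yb: "y \<ge> c1\<^sup>2 * x * real k powr (-D)" .
    have "real k powr (-\<beta>) / (1 + y) \<le> m * x powr (- min (\<beta>/D) 1)"
      unfolding m_def using E1_bound[of "c1\<^sup>2" x "real k" D \<beta> y] c1 x1 kr D \<beta> yb by simp
    also have "\<dots> \<le> m * E" unfolding E_def using m1 by (intro mult_left_mono) auto
    finally have b: "real k powr (-\<beta>) / (1 + y) \<le> m * E" .
    have kb: "real k powr (-\<beta>) > 0" using kr by simp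
    have "1 / (1 + y) \<le> m * E * real k powr \<beta>"
    proof -
      have "1 / (1 + y) = real k powr (-\<beta>) / (1 + y) * real k powr \<beta>"
        using kr by (simp add: powr_minus_divide)
      also have "\<dots> \<le> m * E * real k powr \<beta>" using b by (intro mult_right_mono) auto
      finally show ?thesis .
    qed
    then have "(1 / (1 + y))\<^sup>2 \<le> (m * E * real k powr \<beta>)\<^sup>2" using y0 by (intro power_mono) auto
    also have "(m * E * real k powr \<beta>)\<^sup>2 = C * real k powr (2*\<beta>)"
      unfolding C_def using kr by (simp add: power_mult_distrib powr_realpow[symmetric] powr_powr mult.commute)
    finally show ?thesis unfolding y_def by (simp add: add.commute power_one_over)
  qed
  have w2: "1 \<le> C * real k powr (2*\<beta>)" if k: "k \<in> {n..}" for k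
  proof -
    have kr: "real k \<ge> real n" and n1: "real n \<ge> 1" using k n by auto
    have "real k powr (-\<beta>) \<le> real n powr (-\<beta>)" using kr n1 \<beta> by (intro powr_mono2') auto
    also have "\<dots> \<le> E" unfolding E_def by (rule nbeta_bound[OF n \<rho> \<alpha> \<beta> p D_def x_def])
    also have "E \<le> m * E" using m1 E0 by (simp add: mult_le_cancel_right1)
    finally have "real k powr (-\<beta>) \<le> m * E" .
    then have "real k powr (-\<beta>) * real k powr \<beta> \<le> m * E * real k powr \<beta>" by (intro mult_right_mono) auto
    moreover have "real k powr (-\<beta>) * real k powr \<beta> = 1" using kr n1 by (simp add: powr_add[symmetric])
    ultimately have "1 \<le> m * E * real k powr \<beta>" by simp
    then have "1\<^sup>2 \<le> (m * E * real k powr \<beta>)\<^sup>2" by (intro power_mono) auto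
    also have "(m * E * real k powr \<beta>)\<^sup>2 = C * real k powr (2*\<beta>)"
      unfolding C_def using kr n1 by (simp add: power_mult_distrib powr_realpow[symmetric] powr_powr mult.commute)
    finally show ?thesis by simp
  qed
  have "(\<Sum>k\<in>{1..<n}. (f0 k)\<^sup>2 / (real n * (a k)\<^sup>2 * lam k + 1)\<^sup>2) \<le> (\<Sum>k\<in>{1..<n}. C * h k)"
  proof (rule sum_mono)
    fix k assume k: "k \<in> {1..<n}"
    have "(f0 k)\<^sup>2 / (real n * (a k)\<^sup>2 * lam k + 1)\<^sup>2 = (f0 k)\<^sup>2 * (1 / (real n * (a k)\<^sup>2 * lam k + 1)\<^sup>2)" by simp
    also have "\<dots> \<le> (f0 k)\<^sup>2 * (C * real k powr (2*\<beta>))" using w1[OF k] by (intro mult_left_mono) auto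
    finally show "(f0 k)\<^sup>2 / (real n * (a k)\<^sup>2 * lam k + 1)\<^sup>2 \<le> C * h k" unfolding h_def by (simp add: algebra_simps)
  qed
  also have "(\<Sum>k\<in>{1..<n}. C * h k) = C * infsum h {1..<n}" by (simp add: sum_distrib_left infsum_finite)
  finally have P1: "(\<Sum>k\<in>{1..<n}. (f0 k)\<^sup>2 / (real n * (a k)\<^sup>2 * lam k + 1)\<^sup>2) \<le> C * infsum h {1..<n}" .
  have hsn: "h summable_on {n..}" using summable_on_subset[OF hs sub] .
  have "infsum (\<lambda>k. (f0 k)\<^sup>2) {n..} \<le> infsum (\<lambda>k. C * h k) {n..}"
  proof (rule infsum_mono)
    show "(\<lambda>k. (f0 k)\<^sup>2) summable_on {n..}" using summable_on_subset[OF sq sub] .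
    show "(\<lambda>k. C * h k) summable_on {n..}" using hsn by (rule summable_on_cmult_right)
    fix k assume k: "k \<in> {n..}"
    have "(f0 k)\<^sup>2 * 1 \<le> (f0 k)\<^sup>2 * (C * real k powr (2*\<beta>))" using w2[OF k] by (intro mult_left_mono) auto
    then show "(f0 k)\<^sup>2 \<le> C * h k" unfolding h_def by (simp add: algebra_simps)
  qed
  also have "\<dots> = C * infsum h {n..}" by (rule infsum_cmult_right) (rule hsn)
  finally have P2: "infsum (\<lambda>k. (f0 k)\<^sup>2) {n..} \<le> C * infsum h {n..}" .
  have un: "{1..} = {1..<n} \<union> {n..}" using n by auto
  have hsum: "infsum h {1..} = infsum h {1..<n} + infsum h {n..}"
    unfolding un by (rule infsum_Un_disjoint) (auto simp: hsn summable_on_finite)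
  have hK: "infsum h {1..} \<le> K\<^sup>2"
  proof -
    have i0: "infsum h {1..} \<ge> 0" unfolding h_def by (intro infsum_nonneg) auto
    have "Snorm \<beta> f0 = sqrt (infsum h {1..})" unfolding Snorm_def h_def ..
    then have "sqrt (infsum h {1..}) \<le> K" using SK by simp
    then have "(sqrt (infsum h {1..}))\<^sup>2 \<le> K\<^sup>2" using i0 by (intro power_mono) auto
    then show ?thesis using i0 by simp
  qed
  have "(\<Sum>k\<in>{1..<n}. (f0 k)\<^sup>2 / (real n * (a k)\<^sup>2 * lam k + 1)\<^sup>2) + infsum (\<lambda>k. (f0 k)\<^sup>2) {n..}
      \<le> C * infsum h {1..}" unfolding hsum using P1 P2 by (simp add: algebra_simps)
  also have "\<dots> \<le> C * K\<^sup>2" using hK C0 by (intro mult_left_mono) auto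
  finally show ?thesis unfolding C_def m_def .
qed

lemma Bn_bound:
  fixes a f0 Dk :: "nat \<Rightarrow> real" and n :: nat and \<rho> \<alpha> \<beta> p c1 D x E K CR :: real and lam :: "nat \<Rightarrow> real"
  assumes c1: "c1 > 0" and ab: "\<And>k. k \<ge> 1 \<Longrightarrow> c1 * real k powr (-p) \<le> a k"
    and \<rho>: "\<rho> > 0" and \<alpha>: "\<alpha> > 0" and \<beta>: "\<beta> > 0" and p: "p > 0" and n: "n \<ge> 1"
    and D_def: "D = 2*\<alpha>+2*p+1" and x_def: "x = \<rho>\<^sup>2 * real n" and x1: "x \<ge> 1"
    and lam_def: "\<And>k. lam k = \<rho>\<^sup>2 * real k powr (-1-2*\<alpha>)"
    and f0S: "inS \<beta> f0" and SK: "Snorm \<beta> f0 \<le> K"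
    and E_def: "E = max (x powr (- min (\<beta> / D) 1)) (\<rho> * x powr (- (\<alpha> / D)))"
    and Rb: "\<And>k. k \<in> {1..<n} \<Longrightarrow> \<bar>Dk k - a k * f0 k\<bar> \<le> CR * real n powr (-(p+\<beta>))"
    and bp: "\<beta> + p > 1/2" and CR: "CR \<ge> 0"
  shows "(\<Sum>k\<in>{1..<n}. (cc a lam n k * Dk k - f0 k)\<^sup>2 + (cc a lam n k)\<^sup>2 / n + post_var a lam n k)
      + infsum (\<lambda>k. (f0 k)\<^sup>2) {n..}
     \<le> (2 * (max 1 (1/c1\<^sup>2))\<^sup>2 * K\<^sup>2 + (2*CR\<^sup>2 + 2) * (1/c1\<^sup>2 + 2 powr (2*\<alpha>) / (2*\<alpha>))) * E\<^sup>2"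
proof -
  define T where "T = infsum (\<lambda>k. (f0 k)\<^sup>2) {n..}"
  have T0: "T \<ge> 0" unfolding T_def by (intro infsum_nonneg) auto
  define W where "W = (\<Sum>k\<in>{1..<n}. (f0 k)\<^sup>2 / (real n * (a k)\<^sup>2 * lam k + 1)\<^sup>2)"
  define V where "V = (\<Sum>k\<in>{1..<n}. post_var a lam n k)"
  have WT: "W + T \<le> (max 1 (1/c1\<^sup>2))\<^sup>2 * E\<^sup>2 * K\<^sup>2"
    unfolding W_def T_def by (rule W_bound[OF c1 ab \<rho> \<alpha> \<beta> p n D_def x_def x1 lam_def f0S SK E_def])
  have VB: "V \<le> (1/c1\<^sup>2 + 2 powr (2*\<alpha>) / (2*\<alpha>)) * (\<rho>\<^sup>2 * x powr (-(2*\<alpha>/D)))"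
    unfolding V_def by (rule V_bound[OF c1 ab \<rho> \<alpha> p n D_def x_def x1 lam_def])
  have VE: "\<rho>\<^sup>2 * x powr (-(2*\<alpha>/D)) \<le> E\<^sup>2"
  proof -
    have "\<rho>\<^sup>2 * x powr (-(2*\<alpha>/D)) = (\<rho> * x powr (-(\<alpha>/D)))\<^sup>2"
      using x1 by (simp add: power_mult_distrib powr_realpow[symmetric] powr_powr mult.commute)
    also have "\<dots> \<le> E\<^sup>2" unfolding E_def using \<rho> by (intro power_mono) auto
    finally show ?thesis .
  qed
  have CV0: "1/c1\<^sup>2 + 2 powr (2*\<alpha>) / (2*\<alpha>) \<ge> 0" using \<alpha> by simp
  have nb: "real n * (real n powr (-(p+\<beta>)))\<^sup>2 \<le> 1"
  proof -
    have nr: "real n \<ge> 1" using n by simp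
    have "(real n powr (-(p+\<beta>)))\<^sup>2 = real n powr (-(p+\<beta>)) * real n powr (-(p+\<beta>))"
      by (simp add: power2_eq_square)
    also have "\<dots> = real n powr (-(p+\<beta>) + -(p+\<beta>))" by (rule powr_add[symmetric])
    finally have "real n * (real n powr (-(p+\<beta>)))\<^sup>2 = real n powr 1 * real n powr (-(p+\<beta>) + -(p+\<beta>))"
      using nr by simp
    also have "\<dots> = real n powr (1 - 2*(p+\<beta>))"
    proof -
      have ex: "1 - 2*(p+\<beta>) = 1 + (-(p+\<beta>) + -(p+\<beta>))" by simp
      show ?thesis unfolding ex by (rule powr_add[symmetric])
    qed
    also have "\<dots> \<le> real n powr 0" using nr bp by (intro powr_mono) auto
    finally show ?thesis using nr by simp
  qed
  have trm: "(cc a lam n k * Dk k - f0 k)\<^sup>2 + (cc a lam n k)\<^sup>2 / n + post_var a lam n k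
      \<le> 2 * ((f0 k)\<^sup>2 / (real n * (a k)\<^sup>2 * lam k + 1)\<^sup>2) + (2*CR\<^sup>2 + 2) * post_var a lam n k"
    if k: "k \<in> {1..<n}" for k
  proof -
    have k1: "k \<ge> 1" and kn: "k < n" using k by auto
    have ap0: "c1 * real k powr (-p) > 0" using c1 k1 by simp
    have apos: "a k > 0" using ab[OF k1] ap0 by linarith
    have lp: "lam k > 0" unfolding lam_def using \<rho> k1 by simp
    define den where "den = real n * (a k)\<^sup>2 * lam k + 1"
    have "real n * (a k)\<^sup>2 * lam k \<ge> 0" using lp by simp
    then have den: "den > 0" "den \<ge> 1" unfolding den_def by linarith+
    define R where "R = Dk k - a k * f0 k"
    have pv: "post_var a lam n k = lam k / den" unfolding den_def using kn by (simp add: post_var_def)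
    have ccd: "cc a lam n k = real n * a k * lam k / den" unfolding cc_def den_def ..
    have dd: "real n * (a k)\<^sup>2 * lam k = den - 1" unfolding den_def by simp
    have ca: "cc a lam n k * a k = (den - 1) / den"
    proof -
      have "cc a lam n k * a k = (real n * (a k)\<^sup>2 * lam k) / den" unfolding ccd by (simp add: power2_eq_square ac_simps)
      then show ?thesis unfolding dd .
    qed
    have ca2: "(den - 1) / den - 1 = - 1 / den" using den by (simp add: field_simps)
    have e1: "cc a lam n k * Dk k - f0 k = (- f0 k / den) + cc a lam n k * R"
    proof -
      have "cc a lam n k * Dk k - f0 k = cc a lam n k * R + (cc a lam n k * a k - 1) * f0 k"
        unfolding R_def by (simp add: algebra_simps)
      also have "\<dots> = cc a lam n k * R + (- 1 / den) * f0 k" unfolding ca ca2 ..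
      finally show ?thesis by simp
    qed
    have sq: "(u + v)\<^sup>2 \<le> 2 * u\<^sup>2 + 2 * v\<^sup>2" for u v :: real
      using sum_squares_ge_zero[of "u - v" 0] by (simp add: power2_eq_square algebra_simps)
    have cc2: "(cc a lam n k)\<^sup>2 \<le> real n * post_var a lam n k"
    proof -
      have A: "(cc a lam n k)\<^sup>2 = real n * (lam k / den) * ((real n * (a k)\<^sup>2 * lam k) / den)"
        unfolding ccd by (simp add: power2_eq_square ac_simps)
      have "(real n * (a k)\<^sup>2 * lam k) / den \<le> 1" unfolding dd using den by simp
      then have "real n * (lam k / den) * ((real n * (a k)\<^sup>2 * lam k) / den) \<le> real n * (lam k / den) * 1"
        using den lp n by (intro mult_left_mono) auto
      then show ?thesis unfolding pv A by simp
    qed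
    have R2: "R\<^sup>2 \<le> CR\<^sup>2 * (real n powr (-(p+\<beta>)))\<^sup>2"
    proof -
      have "\<bar>R\<bar> \<le> CR * real n powr (-(p+\<beta>))" unfolding R_def by (rule Rb[OF k])
      then have "\<bar>R\<bar>\<^sup>2 \<le> (CR * real n powr (-(p+\<beta>)))\<^sup>2" by (intro power_mono) auto
      then show ?thesis by (simp add: power_mult_distrib)
    qed
    have pv0: "post_var a lam n k \<ge> 0" unfolding pv using lp den by simp
    have t2: "(cc a lam n k * R)\<^sup>2 \<le> CR\<^sup>2 * post_var a lam n k"
    proof -
      have "(cc a lam n k * R)\<^sup>2 = (cc a lam n k)\<^sup>2 * R\<^sup>2" by (simp add: power_mult_distrib)
      also have "\<dots> \<le> (real n * post_var a lam n k) * (CR\<^sup>2 * (real n powr (-(p+\<beta>)))\<^sup>2)"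
        using cc2 R2 pv0 by (intro mult_mono) auto
      also have "\<dots> = CR\<^sup>2 * post_var a lam n k * (real n * (real n powr (-(p+\<beta>)))\<^sup>2)" by (simp add: algebra_simps)
      also have "\<dots> \<le> CR\<^sup>2 * post_var a lam n k * 1" using nb pv0 by (intro mult_left_mono) auto
      finally show ?thesis by simp
    qed
    have t3: "(cc a lam n k)\<^sup>2 / n \<le> post_var a lam n k" using cc2 n by (simp add: divide_le_eq mult.commute)
    have "(cc a lam n k * Dk k - f0 k)\<^sup>2 \<le> 2 * (- f0 k / den)\<^sup>2 + 2 * (cc a lam n k * R)\<^sup>2"
      unfolding e1 by (rule sq)
    also have "(- f0 k / den)\<^sup>2 = (f0 k)\<^sup>2 / (real n * (a k)\<^sup>2 * lam k + 1)\<^sup>2"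
      unfolding den_def by (simp add: power_divide)
    finally show ?thesis using t2 t3 by (simp add: algebra_simps)
  qed
  have "(\<Sum>k\<in>{1..<n}. (cc a lam n k * Dk k - f0 k)\<^sup>2 + (cc a lam n k)\<^sup>2 / n + post_var a lam n k)
      \<le> (\<Sum>k\<in>{1..<n}. 2 * ((f0 k)\<^sup>2 / (real n * (a k)\<^sup>2 * lam k + 1)\<^sup>2) + (2*CR\<^sup>2 + 2) * post_var a lam n k)"
    by (rule sum_mono) (rule trm)
  also have "\<dots> = 2 * W + (2*CR\<^sup>2 + 2) * V"
    unfolding W_def V_def by (simp add: sum.distrib sum_distrib_left)
  finally have S: "(\<Sum>k\<in>{1..<n}. (cc a lam n k * Dk k - f0 k)\<^sup>2 + (cc a lam n k)\<^sup>2 / n + post_var a lam n k)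
      \<le> 2 * W + (2*CR\<^sup>2 + 2) * V" .
  have "(2*CR\<^sup>2 + 2) * V \<le> (2*CR\<^sup>2 + 2) * ((1/c1\<^sup>2 + 2 powr (2*\<alpha>) / (2*\<alpha>)) * E\<^sup>2)"
  proof -
    have "V \<le> (1/c1\<^sup>2 + 2 powr (2*\<alpha>) / (2*\<alpha>)) * E\<^sup>2"
      using VB mult_left_mono[OF VE CV0] by linarith
    then show ?thesis by (intro mult_left_mono) auto
  qed
  moreover have "(2 * (max 1 (1/c1\<^sup>2))\<^sup>2 * K\<^sup>2 + (2*CR\<^sup>2 + 2) * (1/c1\<^sup>2 + 2 powr (2*\<alpha>) / (2*\<alpha>))) * E\<^sup>2
      = 2 * ((max 1 (1/c1\<^sup>2))\<^sup>2 * E\<^sup>2 * K\<^sup>2) + (2*CR\<^sup>2 + 2) * ((1/c1\<^sup>2 + 2 powr (2*\<alpha>) / (2*\<alpha>)) * E\<^sup>2)"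
    by (simp add: algebra_simps)
  ultimately show ?thesis using S WT T0 unfolding T_def[symmetric] by linarith
qed

lemma epp_bound:
  fixes a :: "nat \<Rightarrow> real" and \<psi> :: "nat \<Rightarrow> real \<Rightarrow> real" and lam f0 :: "nat \<Rightarrow> real" and n :: nat and r :: real
  assumes n: "n \<ge> 2" and r: "r > 0" and lam: "\<And>k. lam k \<ge> 0"
    and sq: "(\<lambda>k. (f0 k)\<^sup>2) summable_on {1..}"
    and diag: "\<And>k. k \<in> {1..n-1} \<Longrightarrow> dip n (\<psi> k) (\<psi> k) = 1"
  shows "exp_post_prob a \<psi> lam n f0 r \<le>
    ((\<Sum>k\<in>{1..<n}. (cc a lam n k * Udata a \<psi> n f0 (\<lambda>_. 0) k - f0 k)\<^sup>2 + (cc a lam n k)\<^sup>2 / n + post_var a lam n k)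
      + infsum (\<lambda>k. (f0 k)\<^sup>2) {n..}) / r\<^sup>2"
proof -
  interpret prob_space "noise n" by (rule prob_noise)
  define D where "D k = Udata a \<psi> n f0 (\<lambda>_. 0) k" for k
  define T where "T = infsum (\<lambda>k. (f0 k)\<^sup>2) {n..}"
  define w where "w k i = cc a lam n k * \<psi> k (real i / real n) / real n" for k i
  define B where "B = (\<Sum>k\<in>{1..<n}. (cc a lam n k * D k - f0 k)\<^sup>2 + (cc a lam n k)\<^sup>2 / n + post_var a lam n k) + T"
  have den: "real n * (a k)\<^sup>2 * lam k + 1 > 0" for k
    using lam[of k] by (simp add: add_nonneg_pos)
  have vnn: "post_var a lam n k \<ge> 0" for k
    unfolding post_var_def using den[of k] lam[of k] by simp
  have Ueq: "Udata a \<psi> n f0 \<xi> k = D k + (\<Sum>i\<in>{1..n}. (\<psi> k (real i / real n) / real n) * \<xi> i)" for \<xi> k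
    unfolding D_def Udata_def by (simp add: algebra_simps sum.distrib sum_divide_distrib add_divide_distrib)
  have pm: "post_mean a lam n (Udata a \<psi> n f0 \<xi>) k - f0 k = (cc a lam n k * D k - f0 k) + (\<Sum>i\<in>{1..n}. w k i * \<xi> i)"
    if k: "k \<in> {1..<n}" for \<xi> k
  proof -
    have "post_mean a lam n (Udata a \<psi> n f0 \<xi>) k = cc a lam n k * Udata a \<psi> n f0 \<xi> k"
      using k unfolding post_mean_def cc_def by simp
    then show ?thesis unfolding Ueq w_def by (simp add: algebra_simps sum_distrib_left)
  qed
  define h where "h \<xi> = ((\<Sum>k\<in>{1..<n}. ((cc a lam n k * D k - f0 k) + (\<Sum>i\<in>{1..n}. w k i * \<xi> i))\<^sup>2 + post_var a lam n k) + T) / r\<^sup>2" for \<xi>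
  have pw: "measure (posterior a lam n (Udata a \<psi> n f0 \<xi>))
              {f \<in> space (posterior a lam n (Udata a \<psi> n f0 \<xi>)). H1norm (\<lambda>k. f k - f0 k) \<ge> r} \<le> h \<xi>" for \<xi>
  proof -
    have "measure (posterior a lam n (Udata a \<psi> n f0 \<xi>))
              {f \<in> space (posterior a lam n (Udata a \<psi> n f0 \<xi>)). H1norm (\<lambda>k. f k - f0 k) \<ge> r}
        \<le> ((\<Sum>k\<in>{1..<n}. (post_mean a lam n (Udata a \<psi> n f0 \<xi>) k - f0 k)\<^sup>2 + post_var a lam n k) + T) / r\<^sup>2"
      unfolding posterior_def T_def
      by (rule post_bound) (use vnn r n sq in \<open>auto simp: post_mean_def post_var_def\<close>)
    also have "\<dots> = h \<xi>" unfolding h_def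
      by (intro arg_cong[where f="\<lambda>x. (x + T) / r\<^sup>2"] sum.cong refl) (simp add: pm)
    finally show ?thesis .
  qed
  have ws: "(\<Sum>i\<in>{1..n}. (w k i)\<^sup>2) = (cc a lam n k)\<^sup>2 / n" if k: "k \<in> {1..<n}" for k
  proof -
    have "dip n (\<psi> k) (\<psi> k) = 1" using diag[of k] k by auto
    then have s: "(\<Sum>i\<in>{1..n}. \<psi> k (real i / real n) * \<psi> k (real i / real n)) = real n"
      unfolding dip_def using n by (simp add: divide_eq_1_iff)
    have "(\<Sum>i\<in>{1..n}. (w k i)\<^sup>2) = (cc a lam n k)\<^sup>2 / (real n)\<^sup>2 * (\<Sum>i\<in>{1..n}. \<psi> k (real i / real n) * \<psi> k (real i / real n))"
      unfolding w_def by (simp add: sum_distrib_left power2_eq_square algebra_simps)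
    also have "\<dots> = (cc a lam n k)\<^sup>2 / n" unfolding s using n by (simp add: power2_eq_square)
    finally show ?thesis .
  qed
  have Q: "integrable (noise n) (\<lambda>\<xi>. ((cc a lam n k * D k - f0 k) + (\<Sum>i\<in>{1..n}. w k i * \<xi> i))\<^sup>2) \<and>
     (\<integral>\<xi>. ((cc a lam n k * D k - f0 k) + (\<Sum>i\<in>{1..n}. w k i * \<xi> i))\<^sup>2 \<partial>noise n) = (cc a lam n k * D k - f0 k)\<^sup>2 + (\<Sum>i\<in>{1..n}. (w k i)\<^sup>2)" for k
    by (rule noise_quad)
  define q where "q \<xi> = (\<Sum>k\<in>{1..<n}. ((cc a lam n k * D k - f0 k) + (\<Sum>i\<in>{1..n}. w k i * \<xi> i))\<^sup>2 + post_var a lam n k)" for \<xi>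
  have qi: "integrable (noise n) q"
    unfolding q_def using Q by (intro Bochner_Integration.integrable_sum Bochner_Integration.integrable_add integrable_const) auto
  have qv: "(\<integral>\<xi>. q \<xi> \<partial>noise n) = (\<Sum>k\<in>{1..<n}. (cc a lam n k * D k - f0 k)\<^sup>2 + (cc a lam n k)\<^sup>2 / n + post_var a lam n k)"
  proof -
    have "(\<integral>\<xi>. q \<xi> \<partial>noise n) = (\<Sum>k\<in>{1..<n}. \<integral>\<xi>. ((cc a lam n k * D k - f0 k) + (\<Sum>i\<in>{1..n}. w k i * \<xi> i))\<^sup>2 + post_var a lam n k \<partial>noise n)"
      unfolding q_def using Q by (intro Bochner_Integration.integral_sum Bochner_Integration.integrable_add integrable_const) auto
    also have "\<dots> = (\<Sum>k\<in>{1..<n}. (cc a lam n k * D k - f0 k)\<^sup>2 + (cc a lam n k)\<^sup>2 / n + post_var a lam n k)"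
    proof (rule sum.cong[OF refl])
      fix k assume k: "k \<in> {1..<n}"
      show "(\<integral>\<xi>. ((cc a lam n k * D k - f0 k) + (\<Sum>i\<in>{1..n}. w k i * \<xi> i))\<^sup>2 + post_var a lam n k \<partial>noise n)
          = (cc a lam n k * D k - f0 k)\<^sup>2 + (cc a lam n k)\<^sup>2 / n + post_var a lam n k"
        using Q[of k] ws[OF k] prob_space by (simp add: Bochner_Integration.integral_add)
    qed
    finally show ?thesis .
  qed
  have hq: "h = (\<lambda>\<xi>. (q \<xi> + T) / r\<^sup>2)" unfolding h_def q_def by (simp add: fun_eq_iff)
  have hi: "integrable (noise n) h" unfolding hq using qi by auto
  have hv: "(\<integral>\<xi>. h \<xi> \<partial>noise n) = B / r\<^sup>2"
    unfolding hq B_def using qi qv prob_space by (simp add: Bochner_Integration.integral_add)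
  have B0: "B \<ge> 0" unfolding B_def T_def using vnn
    by (intro add_nonneg_nonneg sum_nonneg infsum_nonneg) auto
  let ?g = "\<lambda>\<xi>. measure (posterior a lam n (Udata a \<psi> n f0 \<xi>))
              {f \<in> space (posterior a lam n (Udata a \<psi> n f0 \<xi>)). H1norm (\<lambda>k. f k - f0 k) \<ge> r}"
  have "exp_post_prob a \<psi> lam n f0 r = (\<integral>\<xi>. ?g \<xi> \<partial>noise n)" unfolding exp_post_prob_def ..
  also have "\<dots> \<le> B / r\<^sup>2"
  proof (cases "integrable (noise n) ?g")
    case True
    have "(\<integral>\<xi>. ?g \<xi> \<partial>noise n) \<le> (\<integral>\<xi>. h \<xi> \<partial>noise n)"
      by (rule integral_mono[OF True hi pw])
    then show ?thesis using hv by simp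
  next
    case False
    then show ?thesis using B0 by (simp add: not_integrable_integral_eq)
  qed
  finally show ?thesis unfolding B_def D_def T_def .
qed



lemma max_powr_neg:
  fixes n u v :: real assumes n: "n \<ge> 1"
  shows "max (n powr (-u)) (n powr (-v)) = n powr (- min u v)"
proof (cases "u \<le> v")
  case True
  have "n powr (-v) \<le> n powr (-u)" using True n by (intro powr_mono) auto
  then show ?thesis using True by (simp add: max_def min_def)
next
  case False
  have "n powr (-u) \<le> n powr (-v)" using False n by (intro powr_mono) auto
  then show ?thesis using False by (simp add: max_def min_def)
qed

lemma part2:
  fixes \<alpha> \<beta> p D :: real and n :: nat
  assumes \<alpha>: "\<alpha> > 0" and \<beta>: "\<beta> > 0" and p: "p > 0" and D_def: "D = 2 * \<alpha> + 2 * p + 1"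
  shows "max ((1\<^sup>2 * real n) powr (- min (\<beta> / D) 1)) (1 * (1\<^sup>2 * real n) powr (- (\<alpha> / D)))
       = real n powr (- (min \<alpha> \<beta> / D))"
proof -
  have D: "D > 0" "\<alpha> / D < 1" unfolding D_def using \<alpha> p by auto
  have mm: "min (min (\<beta> / D) 1) (\<alpha> / D) = min \<alpha> \<beta> / D"
  proof -
    have m1: "min (min (\<beta>/D) 1) (\<alpha>/D) = min (\<beta>/D) (\<alpha>/D)" using D(2) by (auto simp: min_def)
    have m2: "min (\<beta>/D) (\<alpha>/D) = min \<alpha> \<beta> / D" using D(1) by (auto simp: min_def divide_le_cancel)
    show ?thesis using m1 m2 by simp
  qed
  show ?thesis
  proof (cases "n = 0")
    case True then show ?thesis by simp
  next
    case False
    then have n: "real n \<ge> 1" by simp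
    show ?thesis using max_powr_neg[OF n, of "min (\<beta> / D) 1" "\<alpha> / D"] mm by simp
  qed
qed

lemma part4_lower:
  fixes \<rho> \<alpha> \<beta> p D \<theta> x :: real and n :: nat
  assumes \<rho>: "\<rho> > 0" and \<alpha>: "\<alpha> > 0" and p: "p > 0" and D_def: "D = 2 * \<alpha> + 2 * p + 1"
    and \<beta>D: "\<beta> > D" and \<theta>_def: "\<theta> = D / (2 * D + 2 * p + 1)" and n: "n \<ge> 1"
    and x_def: "x = \<rho>\<^sup>2 * real n"
  shows "real n powr (-\<theta>) \<le> max (x powr (- min (\<beta> / D) 1)) (\<rho> * x powr (- (\<alpha> / D)))"
proof -
  have D: "D > 1" unfolding D_def using \<alpha> p by simp
  have nr: "real n \<ge> 1" using n by simp
  have x: "x > 0" unfolding x_def using \<rho> nr by simp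
  have th: "\<theta> > 0" unfolding \<theta>_def using D p by simp
  have m1: "min (\<beta> / D) 1 = 1" using \<beta>D D by simp
  show ?thesis
  proof (cases "x \<le> real n powr \<theta>")
    case True
    have "real n powr (-\<theta>) = (real n powr \<theta>) powr (-1)" using nr by (simp add: powr_powr powr_minus_divide)
    also have "\<dots> \<le> x powr (-1)" using True x by (intro powr_mono2') auto
    finally have "real n powr (-\<theta>) \<le> x powr (- min (\<beta> / D) 1)" unfolding m1 by simp
    then show ?thesis by simp
  next
    case False
    define z where "z = \<rho> * x powr (-(\<alpha>/D))"
    have z0: "z \<ge> 0" unfolding z_def using \<rho> by simp
    have e: "1 - 2*\<alpha>/D = (2*p+1)/D" unfolding D_def using D D_def by (simp add: field_simps)
    have "z\<^sup>2 = \<rho>\<^sup>2 * (x powr (-(\<alpha>/D)))\<^sup>2" unfolding z_def by (simp add: power_mult_distrib)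
    also have "(x powr (-(\<alpha>/D)))\<^sup>2 = x powr (-(2*\<alpha>/D))" using x by (simp add: powr_realpow[symmetric] powr_powr mult.commute)
    also have "\<rho>\<^sup>2 = x / real n" unfolding x_def using nr by simp
    also have "x / real n * x powr (-(2*\<alpha>/D)) = x powr (1 - 2*\<alpha>/D) / real n"
      using x by (simp add: powr_diff powr_minus_divide)
    also have "\<dots> = x powr ((2*p+1)/D) / real n" unfolding e ..
    finally have z2: "z\<^sup>2 = x powr ((2*p+1)/D) / real n" .
    have "(real n powr \<theta>) powr ((2*p+1)/D) \<le> x powr ((2*p+1)/D)"
      using False nr D p by (intro powr_mono2) auto
    then have "real n powr (\<theta> * ((2*p+1)/D)) / real n \<le> z\<^sup>2" unfolding z2 using nr
      by (simp add: powr_powr divide_right_mono)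
    moreover have "real n powr (\<theta> * ((2*p+1)/D)) / real n = (real n powr (-\<theta>))\<^sup>2"
    proof -
      define Q where "Q = 2*D+2*p+1"
      have Q: "Q \<noteq> 0" unfolding Q_def using D p by simp
      have D0: "D \<noteq> 0" using D by simp
      have th': "\<theta> = D / Q" unfolding \<theta>_def Q_def ..
      have ex1: "\<theta> * ((2*p+1)/D) = (2*p+1)/Q" unfolding th' using D0 Q by (simp add: field_simps)
      have ex2a: "1 + (-\<theta> + -\<theta>) = (Q - 2*D)/Q" unfolding th' using Q by (simp add: field_simps)
      have ex2b: "Q - 2*D = 2*p+1" unfolding Q_def by simp
      have ex2: "1 + (-\<theta> + -\<theta>) = (2*p+1)/Q" unfolding ex2a ex2b ..
      have ex: "\<theta> * ((2*p+1)/D) = 1 + (-\<theta> + -\<theta>)" unfolding ex1 ex2 ..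
      have "real n powr (\<theta> * ((2*p+1)/D)) = real n powr 1 * (real n powr (-\<theta>) * real n powr (-\<theta>))"
        unfolding ex by (simp only: powr_add)
      then show ?thesis using nr by (simp add: power2_eq_square)
    qed
    ultimately have "(real n powr (-\<theta>))\<^sup>2 \<le> z\<^sup>2" by simp
    then have "real n powr (-\<theta>) \<le> z" using z0 by (rule power2_le_imp_le)
    then show ?thesis unfolding z_def by simp
  qed
qed

lemma part4:
  fixes \<rho> :: "nat \<Rightarrow> real" and \<alpha> \<beta> p D E' :: real
  assumes \<rho>: "\<And>n. \<rho> n > 0" and \<alpha>: "\<alpha> > 0" and p: "p > 0" and D_def: "D = 2 * \<alpha> + 2 * p + 1"
    and \<beta>D: "\<beta> > D" and E'_def: "E' = 2 * \<beta> + 2 * p + 1"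
  shows "(\<lambda>n. real n powr (- (\<beta> / E'))) \<in>
     o(\<lambda>n. max (((\<rho> n)\<^sup>2 * real n) powr (- min (\<beta> / D) 1)) (\<rho> n * ((\<rho> n)\<^sup>2 * real n) powr (- (\<alpha> / D))))"
proof (rule landau_o.smallI)
  fix c :: real assume c: "c > 0"
  define \<theta> where "\<theta> = D / (2 * D + 2 * p + 1)"
  have D: "D > 1" unfolding D_def using \<alpha> p by simp
  have lt: "\<theta> < \<beta> / E'"
  proof -
    have "D * (1 + 2*p) < \<beta> * (1 + 2*p)" using \<beta>D p by (intro mult_strict_right_mono) auto
    then have "D * (2 * \<beta> + 2 * p + 1) < \<beta> * (2 * D + 2 * p + 1)" by (simp add: algebra_simps)
    then show ?thesis unfolding \<theta>_def E'_def using D p \<beta>D by (simp add: field_simps)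
  qed
  have "((\<lambda>n. real n powr (\<theta> - \<beta> / E')) \<longlongrightarrow> 0) sequentially"
    using lt by (intro tendsto_neg_powr filterlim_real_sequentially) auto
  then have ev: "eventually (\<lambda>n. real n powr (\<theta> - \<beta> / E') < c) sequentially"
    using c by (rule order_tendstoD)
  show "eventually (\<lambda>n. norm (real n powr (- (\<beta> / E'))) \<le> c * norm (max (((\<rho> n)\<^sup>2 * real n) powr (- min (\<beta> / D) 1)) (\<rho> n * ((\<rho> n)\<^sup>2 * real n) powr (- (\<alpha> / D))))) sequentially"
    using ev eventually_ge_at_top[of "1::nat"]
  proof eventually_elim
    case (elim n)
    have nr: "real n \<ge> 1" using elim by simp
    have L: "real n powr (-\<theta>) \<le> max (((\<rho> n)\<^sup>2 * real n) powr (- min (\<beta> / D) 1)) (\<rho> n * ((\<rho> n)\<^sup>2 * real n) powr (- (\<alpha> / D)))"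
      by (rule part4_lower[OF \<rho> \<alpha> p D_def \<beta>D \<theta>_def elim(2) refl])
    have M0: "0 \<le> max (((\<rho> n)\<^sup>2 * real n) powr (- min (\<beta> / D) 1)) (\<rho> n * ((\<rho> n)\<^sup>2 * real n) powr (- (\<alpha> / D)))"
      by (rule order.trans[OF _ L]) simp
    have "real n powr (- (\<beta> / E')) = real n powr (\<theta> - \<beta> / E') * real n powr (-\<theta>)"
      using nr by (simp add: powr_add[symmetric])
    also have "\<dots> \<le> c * real n powr (-\<theta>)" using elim(1) by (intro mult_right_mono) auto
    also have "\<dots> \<le> c * max (((\<rho> n)\<^sup>2 * real n) powr (- min (\<beta> / D) 1)) (\<rho> n * ((\<rho> n)\<^sup>2 * real n) powr (- (\<alpha> / D)))"
      using L c by (intro mult_left_mono) auto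
    finally show ?case using M0 by simp
  qed
qed

lemma sq_mult_powr:
  fixes z w t :: real assumes z: "z > 0" and w: "w > 0"
  shows "(z\<^sup>2 * w) powr t = z powr (2 * t) * w powr t"
proof -
  have "(z\<^sup>2 * w) powr t = (z\<^sup>2) powr t * w powr t" using z w by (simp add: powr_mult)
  moreover have "(z\<^sup>2) powr t = z powr (2 * t)"
  proof -
    have "z\<^sup>2 = z powr 2" using z by (simp add: powr_numeral)
    then show ?thesis by (simp add: powr_powr)
  qed
  ultimately show ?thesis by simp
qed

lemma part3:
  fixes \<rho> :: "nat \<Rightarrow> real" and \<alpha> \<beta> p D E' :: real
  assumes \<rho>: "\<And>n. \<rho> n > 0" and \<alpha>: "\<alpha> > 0" and \<beta>: "\<beta> > 0" and p: "p > 0"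
    and D_def: "D = 2 * \<alpha> + 2 * p + 1" and E'_def: "E' = 2 * \<beta> + 2 * p + 1" and \<beta>D: "\<beta> \<le> D"
    and th: "\<rho> \<in> \<Theta>(\<lambda>n. real n powr ((\<alpha> - \<beta>) / E'))"
  shows "(\<lambda>n. max (((\<rho> n)\<^sup>2 * real n) powr (- min (\<beta> / D) 1)) (\<rho> n * ((\<rho> n)\<^sup>2 * real n) powr (- (\<alpha> / D))))
     \<in> \<Theta>(\<lambda>n. real n powr (- (\<beta> / E')))"
proof -
  define \<gamma> where "\<gamma> = (\<alpha> - \<beta>) / E'"
  have D: "D > 0" unfolding D_def using \<alpha> p by simp
  have E': "E' > 0" unfolding E'_def using \<beta> p by simp
  have m1: "min (\<beta> / D) 1 = \<beta> / D" using \<beta>D D by simp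
  have g1: "2 * \<gamma> + 1 = D / E'" unfolding \<gamma>_def D_def E'_def using E' E'_def by (simp add: field_simps)
  have g2: "\<gamma> + (D / E') * (-(\<alpha>/D)) = - (\<beta> / E')" unfolding \<gamma>_def using D E' by (simp add: field_simps)
  have g3: "(D / E') * (-(\<beta>/D)) = - (\<beta> / E')" using D E' by (simp add: field_simps)
  from bigthetaD1[OF th] obtain C where C: "C > 0"
    and ev1: "eventually (\<lambda>n. norm (\<rho> n) \<le> C * norm (real n powr \<gamma>)) at_top"
    unfolding \<gamma>_def by (elim landau_o.bigE) auto
  from bigthetaD2[OF th] obtain c where c: "c > 0"
    and ev2: "eventually (\<lambda>n. norm (\<rho> n) \<ge> c * norm (real n powr \<gamma>)) at_top"
    unfolding \<gamma>_def by (elim landau_omega.bigE) auto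
  define lo where "lo = C powr (-(2 * (\<beta>/D)))"
  define hi where "hi = max (c powr (-(2 * (\<beta>/D)))) (C * c powr (-(2 * (\<alpha>/D))))"
  show ?thesis
  proof (rule bigthetaI')
    show "lo > 0" unfolding lo_def using C by simp
    show "hi > 0" unfolding hi_def using C c by (simp add: less_max_iff_disj)
    show "eventually (\<lambda>n. lo * norm (real n powr (- (\<beta> / E'))) \<le>
        norm (max (((\<rho> n)\<^sup>2 * real n) powr (- min (\<beta> / D) 1)) (\<rho> n * ((\<rho> n)\<^sup>2 * real n) powr (- (\<alpha> / D)))) \<and>
        norm (max (((\<rho> n)\<^sup>2 * real n) powr (- min (\<beta> / D) 1)) (\<rho> n * ((\<rho> n)\<^sup>2 * real n) powr (- (\<alpha> / D))))
          \<le> hi * norm (real n powr (- (\<beta> / E')))) at_top"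
      using ev1 ev2 eventually_ge_at_top[of "1::nat"]
    proof eventually_elim
      case (elim n)
      have nr: "real n \<ge> 1" using elim by simp
      define u where "u = real n powr \<gamma>"
      define w where "w = real n powr (D / E')"
      define x where "x = (\<rho> n)\<^sup>2 * real n"
      define N where "N = real n powr (- (\<beta> / E'))"
      have u: "u > 0" unfolding u_def using nr by simp
      have w: "w > 0" unfolding w_def using nr by simp
      have N: "N > 0" unfolding N_def using nr by simp
      have uw: "u\<^sup>2 * real n = w"
      proof -
        have "u\<^sup>2 * real n = real n powr (2 * \<gamma>) * real n powr 1"
          unfolding u_def using nr by (simp add: powr_realpow[symmetric] powr_powr mult.commute)
        also have "\<dots> = real n powr (2 * \<gamma> + 1)" by (rule powr_add[symmetric])
        finally show ?thesis unfolding g1 w_def .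
      qed
      have \<rho>u: "c * u \<le> \<rho> n" "\<rho> n \<le> C * u" using elim \<rho>[of n] u unfolding u_def by auto
      have x: "x > 0" unfolding x_def using \<rho>[of n] nr by simp
      have xl: "c\<^sup>2 * w \<le> x"
      proof -
        have "(c * u)\<^sup>2 \<le> (\<rho> n)\<^sup>2" using \<rho>u c u by (intro power_mono) auto
        then have "(c * u)\<^sup>2 * real n \<le> (\<rho> n)\<^sup>2 * real n" by (intro mult_right_mono) auto
        then show ?thesis unfolding x_def uw[symmetric] by (simp add: power_mult_distrib mult.assoc)
      qed
      have xu: "x \<le> C\<^sup>2 * w"
      proof -
        have "(\<rho> n)\<^sup>2 \<le> (C * u)\<^sup>2" using \<rho>u \<rho>[of n] by (intro power_mono) auto
        then have "(\<rho> n)\<^sup>2 * real n \<le> (C * u)\<^sup>2 * real n" by (intro mult_right_mono) auto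
        then show ?thesis unfolding x_def uw[symmetric] by (simp add: power_mult_distrib mult.assoc)
      qed
      have wb: "w powr (-(\<beta>/D)) = N" unfolding w_def N_def using nr g3 by (simp add: powr_powr)
      have wa: "u * w powr (-(\<alpha>/D)) = N"
      proof -
        have "u * w powr (-(\<alpha>/D)) = real n powr \<gamma> * real n powr ((D / E') * (-(\<alpha>/D)))"
          unfolding u_def w_def using nr by (simp add: powr_powr)
        also have "\<dots> = real n powr (\<gamma> + (D / E') * (-(\<alpha>/D)))" by (rule powr_add[symmetric])
        finally show ?thesis unfolding g2 N_def .
      qed
      define E1 where "E1 = x powr (-(\<beta>/D))"
      define E2 where "E2 = \<rho> n * x powr (-(\<alpha>/D))"
      have E1l: "lo * N \<le> E1"
      proof -
        have "(C\<^sup>2 * w) powr (-(\<beta>/D)) \<le> E1" unfolding E1_def using xu x \<beta> D by (intro powr_mono2') auto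
        moreover have "(C\<^sup>2 * w) powr (-(\<beta>/D)) = lo * N"
          unfolding lo_def wb[symmetric] using C w by (simp add: sq_mult_powr)
        ultimately show ?thesis by simp
      qed
      have E1u: "E1 \<le> c powr (-(2 * (\<beta>/D))) * N"
      proof -
        have "E1 \<le> (c\<^sup>2 * w) powr (-(\<beta>/D))" unfolding E1_def using xl c w \<beta> D by (intro powr_mono2') auto
        moreover have "(c\<^sup>2 * w) powr (-(\<beta>/D)) = c powr (-(2 * (\<beta>/D))) * N"
          unfolding wb[symmetric] using c w by (simp add: sq_mult_powr)
        ultimately show ?thesis by simp
      qed
      have E2u: "E2 \<le> C * c powr (-(2 * (\<alpha>/D))) * N"
      proof -
        have "x powr (-(\<alpha>/D)) \<le> (c\<^sup>2 * w) powr (-(\<alpha>/D))" using xl c w \<alpha> D by (intro powr_mono2') auto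
        also have "\<dots> = c powr (-(2 * (\<alpha>/D))) * w powr (-(\<alpha>/D))" using c w by (simp add: sq_mult_powr)
        finally have a: "x powr (-(\<alpha>/D)) \<le> c powr (-(2 * (\<alpha>/D))) * w powr (-(\<alpha>/D))" .
        have "E2 \<le> (C * u) * (c powr (-(2 * (\<alpha>/D))) * w powr (-(\<alpha>/D)))"
          unfolding E2_def using \<rho>u a \<rho>[of n] by (intro mult_mono) auto
        also have "\<dots> = C * c powr (-(2 * (\<alpha>/D))) * (u * w powr (-(\<alpha>/D)))" by (simp add: algebra_simps)
        finally show ?thesis unfolding wa .
      qed
      have E20: "E2 \<ge> 0" unfolding E2_def using \<rho>[of n] by simp
      have M: "max (((\<rho> n)\<^sup>2 * real n) powr (- min (\<beta> / D) 1)) (\<rho> n * ((\<rho> n)\<^sup>2 * real n) powr (- (\<alpha> / D)))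
          = max E1 E2" unfolding E1_def E2_def x_def m1 ..
      have lo0: "lo > 0" unfolding lo_def using C by simp
      have "lo * N \<le> max E1 E2" using E1l by simp
      moreover have "max E1 E2 \<le> hi * N"
      proof -
        have "c powr (-(2 * (\<beta>/D))) * N \<le> hi * N" unfolding hi_def using N by (intro mult_right_mono) auto
        moreover have "C * c powr (-(2 * (\<alpha>/D))) * N \<le> hi * N" unfolding hi_def using N by (intro mult_right_mono) auto
        ultimately show ?thesis using E1u E2u by simp
      qed
      moreover have "max E1 E2 \<ge> 0" using E20 by simp
      ultimately show ?case unfolding M using N unfolding N_def by simp
    qed
  qed
qed


theorem mainTheorem2:
  fixes a :: "nat \<Rightarrow> real" and \<psi> :: "nat \<Rightarrow> real \<Rightarrow> real" and Mc :: real
    and p \<alpha> \<beta> K :: real and \<rho> Mn :: "nat \<Rightarrow> real"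
  assumes a_pos: "\<And>k. k \<ge> 1 \<Longrightarrow> a k > 0"
    and a_rate: "a \<in> \<Theta>(\<lambda>k. real k powr (- p))"
    and p_pos: "p > 0"
    and orth: "\<And>n j k. n \<ge> 2 \<Longrightarrow> j \<in> {1..n-1} \<Longrightarrow> k \<in> {1..n-1} \<Longrightarrow>
                 dip n (\<psi> j) (\<psi> k) = (if j = k then 1 else 0)"
    and aliasing: "\<exists>kb :: nat \<Rightarrow> nat \<Rightarrow> bool \<Rightarrow> nat. \<forall>n\<ge>2. \<forall>k\<in>{1..n-1}. \<forall>l\<ge>1.
                 kb n k (even l) < n \<and>
                 0 < \<bar>dip n (\<psi> (l * n + kb n k (even l))) (\<psi> k)\<bar> \<and>
                 \<bar>dip n (\<psi> (l * n + kb n k (even l))) (\<psi> k)\<bar> < Mc \<and>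
                 (\<forall>j\<in>{l * n..<(l + 1) * n}. j \<noteq> l * n + kb n k (even l) \<longrightarrow>
                      dip n (\<psi> j) (\<psi> k) = 0)"
    and A_series: "\<And>f x. inS \<beta> f \<Longrightarrow> x \<in> {0..1} \<Longrightarrow>
                 summable (\<lambda>j. a (Suc j) * f (Suc j) * \<psi> (Suc j) x)"
    and beta_pos: "\<beta> > 0" and beta_p: "\<beta> + p > 1 / 2"
    and alpha_pos: "\<alpha> > 0"
    and rho_pos: "\<And>n. \<rho> n > 0"
    and rho_n: "filterlim (\<lambda>n. (\<rho> n)\<^sup>2 * real n) at_top sequentially"
    and K_pos: "K > 0"
    and Mn_inf: "filterlim Mn at_top sequentially"
  defines "lam \<equiv> (\<lambda>n k. (\<rho> n)\<^sup>2 * real k powr (- 1 - 2 * \<alpha>))"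
    and "eps \<equiv> (\<lambda>n. max (((\<rho> n)\<^sup>2 * real n) powr (- min (\<beta> / (2 * \<alpha> + 2 * p + 1)) 1))
                          (\<rho> n * ((\<rho> n)\<^sup>2 * real n) powr (- (\<alpha> / (2 * \<alpha> + 2 * p + 1)))))"
  shows "((\<lambda>n. SUP f0 \<in> {f0. inS \<beta> f0 \<and> Snorm \<beta> f0 \<le> K}.
              exp_post_prob a \<psi> (lam n) n f0 (Mn n * eps n)) \<longlonglongrightarrow> 0)
       \<and> ((\<forall>n. \<rho> n = 1) \<longrightarrow> (\<forall>n. eps n = real n powr (- (min \<alpha> \<beta> / (2 * \<alpha> + 2 * p + 1)))))
       \<and> (\<beta> \<le> 2 * \<alpha> + 2 * p + 1 \<and> \<rho> \<in> \<Theta>(\<lambda>n. real n powr ((\<alpha> - \<beta>) / (2 * \<beta> + 2 * p + 1))) \<longrightarrow>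
            eps \<in> \<Theta>(\<lambda>n. real n powr (- (\<beta> / (2 * \<beta> + 2 * p + 1)))))
       \<and> (\<beta> > 2 * \<alpha> + 2 * p + 1 \<longrightarrow> (\<lambda>n. real n powr (- (\<beta> / (2 * \<beta> + 2 * p + 1)))) \<in> o(eps))"
proof -
  have D0: "2 * \<alpha> + 2 * p + 1 > 1" using alpha_pos p_pos by simp
  have epsf: "eps n = max (((\<rho> n)\<^sup>2 * real n) powr (- min (\<beta> / (2 * \<alpha> + 2 * p + 1)) 1))
                          (\<rho> n * ((\<rho> n)\<^sup>2 * real n) powr (- (\<alpha> / (2 * \<alpha> + 2 * p + 1))))" for n
    unfolding eps_def ..
  have P2: "(\<forall>n. \<rho> n = 1) \<longrightarrow> (\<forall>n. eps n = real n powr (- (min \<alpha> \<beta> / (2 * \<alpha> + 2 * p + 1))))"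
  proof (intro impI allI)
    fix n assume r1: "\<forall>n. \<rho> n = 1"
    have "eps n = max ((1\<^sup>2 * real n) powr (- min (\<beta> / (2 * \<alpha> + 2 * p + 1)) 1))
        (1 * (1\<^sup>2 * real n) powr (- (\<alpha> / (2 * \<alpha> + 2 * p + 1))))"
      unfolding epsf using r1 by (simp only:)
    also have "\<dots> = real n powr (- (min \<alpha> \<beta> / (2 * \<alpha> + 2 * p + 1)))"
      by (rule part2[OF alpha_pos beta_pos p_pos refl])
    finally show "eps n = real n powr (- (min \<alpha> \<beta> / (2 * \<alpha> + 2 * p + 1)))" .
  qed
  have P3: "\<beta> \<le> 2 * \<alpha> + 2 * p + 1 \<and> \<rho> \<in> \<Theta>(\<lambda>n. real n powr ((\<alpha> - \<beta>) / (2 * \<beta> + 2 * p + 1))) \<longrightarrow>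
            eps \<in> \<Theta>(\<lambda>n. real n powr (- (\<beta> / (2 * \<beta> + 2 * p + 1))))"
  proof (intro impI, elim conjE)
    assume bD: "\<beta> \<le> 2 * \<alpha> + 2 * p + 1" and th: "\<rho> \<in> \<Theta>(\<lambda>n. real n powr ((\<alpha> - \<beta>) / (2 * \<beta> + 2 * p + 1)))"
    have e: "eps = (\<lambda>n. max (((\<rho> n)\<^sup>2 * real n) powr (- min (\<beta> / (2 * \<alpha> + 2 * p + 1)) 1))
                          (\<rho> n * ((\<rho> n)\<^sup>2 * real n) powr (- (\<alpha> / (2 * \<alpha> + 2 * p + 1)))))"
      unfolding eps_def ..
    show "eps \<in> \<Theta>(\<lambda>n. real n powr (- (\<beta> / (2 * \<beta> + 2 * p + 1))))"
      unfolding e by (rule part3[OF rho_pos alpha_pos beta_pos p_pos refl refl bD th])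
  qed
  have P4: "\<beta> > 2 * \<alpha> + 2 * p + 1 \<longrightarrow> (\<lambda>n. real n powr (- (\<beta> / (2 * \<beta> + 2 * p + 1)))) \<in> o(eps)"
  proof (intro impI)
    assume bD: "\<beta> > 2 * \<alpha> + 2 * p + 1"
    have e: "eps = (\<lambda>n. max (((\<rho> n)\<^sup>2 * real n) powr (- min (\<beta> / (2 * \<alpha> + 2 * p + 1)) 1))
                          (\<rho> n * ((\<rho> n)\<^sup>2 * real n) powr (- (\<alpha> / (2 * \<alpha> + 2 * p + 1)))))"
      unfolding eps_def ..
    show "(\<lambda>n. real n powr (- (\<beta> / (2 * \<beta> + 2 * p + 1)))) \<in> o(eps)"
      unfolding e by (rule part4[OF rho_pos alpha_pos p_pos refl bD refl])
  qed
  from aliasing obtain kb :: "nat \<Rightarrow> nat \<Rightarrow> bool \<Rightarrow> nat" where kb: "\<forall>n\<ge>2. \<forall>k\<in>{1..n-1}. \<forall>l\<ge>1.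
                 kb n k (even l) < n \<and>
                 0 < \<bar>dip n (\<psi> (l * n + kb n k (even l))) (\<psi> k)\<bar> \<and>
                 \<bar>dip n (\<psi> (l * n + kb n k (even l))) (\<psi> k)\<bar> < Mc \<and>
                 (\<forall>j\<in>{l * n..<(l + 1) * n}. j \<noteq> l * n + kb n k (even l) \<longrightarrow>
                      dip n (\<psi> j) (\<psi> k) = 0)" by blast
  obtain c1 c2 where c1: "c1 > 0" and c2: "c2 > 0"
    and cb: "\<And>k. k \<ge> 1 \<Longrightarrow> c1 * real k powr (- p) \<le> a k \<and> a k \<le> c2 * real k powr (- p)"
    using a_bounds[OF a_rate a_pos] by blast
  define Z where "Z = (\<Sum>l. real (Suc l) powr (-(2*p+2*\<beta>)))"
  define CR where "CR = \<bar>Mc / 2 * (K\<^sup>2 + c2\<^sup>2 * Z)\<bar>"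
  define Cb where "Cb = 2 * (max 1 (1/c1\<^sup>2))\<^sup>2 * K\<^sup>2 + (2*CR\<^sup>2 + 2) * (1/c1\<^sup>2 + 2 powr (2*\<alpha>) / (2*\<alpha>))"
  have CR0: "CR \<ge> 0" unfolding CR_def by simp
  have key: "exp_post_prob a \<psi> (lam n) n f0 (Mn n * eps n) \<le> Cb / (Mn n)\<^sup>2"
    if n: "n \<ge> 2" and x1: "(\<rho> n)\<^sup>2 * real n \<ge> 1" and Mn: "Mn n > 0"
      and f0: "inS \<beta> f0" and SK: "Snorm \<beta> f0 \<le> K" for n f0
  proof -
    have n1: "n \<ge> 1" using n by simp
    have lamd: "\<And>k. lam n k = (\<rho> n)\<^sup>2 * real k powr (-1-2*\<alpha>)" unfolding lam_def by simp
    have epos: "eps n > 0"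
    proof -
      have "\<rho> n * ((\<rho> n)\<^sup>2 * real n) powr (- (\<alpha> / (2 * \<alpha> + 2 * p + 1))) > 0"
      proof -
        have "(\<rho> n)\<^sup>2 * real n \<noteq> 0" using x1 by linarith
        then show ?thesis using rho_pos[of n] by (intro mult_pos_pos) auto
      qed
      then show ?thesis unfolding epsf by (simp add: less_max_iff_disj)
    qed
    have r: "Mn n * eps n > 0" using Mn epos by simp
    have sq: "(\<lambda>k. (f0 k)\<^sup>2) summable_on {1..}" and hs: "(\<lambda>k. (f0 k)\<^sup>2 * real k powr (2*\<beta>)) summable_on {1..}"
      using f0 unfolding inS_def by auto
    have Sn: "infsum (\<lambda>k. (f0 k)\<^sup>2 * real k powr (2*\<beta>)) {1..} \<le> K\<^sup>2"
    proof -
      have i0: "infsum (\<lambda>k. (f0 k)\<^sup>2 * real k powr (2*\<beta>)) {1..} \<ge> 0" by (intro infsum_nonneg) auto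
      have "sqrt (infsum (\<lambda>k. (f0 k)\<^sup>2 * real k powr (2*\<beta>)) {1..}) \<le> K" using SK unfolding Snorm_def .
      then have "(sqrt (infsum (\<lambda>k. (f0 k)\<^sup>2 * real k powr (2*\<beta>)) {1..}))\<^sup>2 \<le> K\<^sup>2" using i0 by (intro power_mono) auto
      then show ?thesis using i0 by simp
    qed
    have diag: "\<And>k. k \<in> {1..n-1} \<Longrightarrow> dip n (\<psi> k) (\<psi> k) = 1" using orth[OF n] by simp
    have lam0: "\<And>k. lam n k \<ge> 0" unfolding lam_def by simp
    have E1: "exp_post_prob a \<psi> (lam n) n f0 (Mn n * eps n) \<le>
      ((\<Sum>k\<in>{1..<n}. (cc a (lam n) n k * Udata a \<psi> n f0 (\<lambda>_. 0) k - f0 k)\<^sup>2 + (cc a (lam n) n k)\<^sup>2 / n + post_var a (lam n) n k)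
        + infsum (\<lambda>k. (f0 k)\<^sup>2) {n..}) / (Mn n * eps n)\<^sup>2"
      by (rule epp_bound[OF n r lam0 sq diag])
    have Rb: "\<bar>Udata a \<psi> n f0 (\<lambda>_. 0) k - a k * f0 k\<bar> \<le> CR * real n powr (-(p+\<beta>))" if k: "k \<in> {1..<n}" for k
    proof -
      have k': "k \<in> {1..n-1}" using k by auto
      have orth': "\<And>j. j \<in> {1..n-1} \<Longrightarrow> dip n (\<psi> j) (\<psi> k) = (if j = k then 1 else 0)"
        using orth[OF n _ k'] by simp
      have als: "\<And>l. l \<ge> 1 \<Longrightarrow> kb n k (even l) < n \<and> \<bar>dip n (\<psi> (l*n + kb n k (even l))) (\<psi> k)\<bar> < Mc \<and>
        (\<forall>j\<in>{l*n..<(l+1)*n}. j \<noteq> l*n + kb n k (even l) \<longrightarrow> dip n (\<psi> j) (\<psi> k) = 0)"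
        using kb n k' by blast
      have summ: "\<And>x. x \<in> {0..1} \<Longrightarrow> summable (\<lambda>j. a (Suc j) * f0 (Suc j) * \<psi> (Suc j) x)"
        using A_series[OF f0] by blast
      have "\<bar>Udata a \<psi> n f0 (\<lambda>_. 0) k - a k * f0 k\<bar>
          \<le> Mc / 2 * (K\<^sup>2 + c2\<^sup>2 * (\<Sum>l. real (Suc l) powr (-(2*p+2*\<beta>)))) * real n powr (-(p+\<beta>))"
        by (rule R_bound[where kb="\<lambda>l. kb n k (even l)", OF n k' orth' als summ a_pos _ hs Sn beta_p c2])
          (use cb in auto)
      also have "\<dots> \<le> CR * real n powr (-(p+\<beta>))"
        unfolding CR_def Z_def by (intro mult_right_mono) auto
      finally show ?thesis .
    qed
    have ab: "\<And>k. k \<ge> 1 \<Longrightarrow> c1 * real k powr (-p) \<le> a k" using cb by blast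
    have E2: "(\<Sum>k\<in>{1..<n}. (cc a (lam n) n k * Udata a \<psi> n f0 (\<lambda>_. 0) k - f0 k)\<^sup>2 + (cc a (lam n) n k)\<^sup>2 / n + post_var a (lam n) n k)
        + infsum (\<lambda>k. (f0 k)\<^sup>2) {n..} \<le> Cb * (eps n)\<^sup>2"
      unfolding Cb_def
      by (rule Bn_bound[OF c1 ab rho_pos[of n] alpha_pos beta_pos p_pos n1 refl refl x1 lamd f0 SK epsf Rb beta_p CR0])
    have "exp_post_prob a \<psi> (lam n) n f0 (Mn n * eps n) \<le> Cb * (eps n)\<^sup>2 / (Mn n * eps n)\<^sup>2"
      using E1 E2 r by (smt (verit) divide_right_mono zero_le_power2)
    also have "\<dots> = Cb / (Mn n)\<^sup>2" using epos Mn by (simp add: power_mult_distrib)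
    finally show ?thesis .
  qed
  define S where "S = {f0. inS \<beta> f0 \<and> Snorm \<beta> f0 \<le> K}"
  have zS: "(\<lambda>_. 0) \<in> S" unfolding S_def inS_def Snorm_def using K_pos by simp
  have nn: "exp_post_prob a \<psi> (lam n) n f0 r \<ge> 0" for n f0 r
    unfolding exp_post_prob_def by (rule Bochner_Integration.integral_nonneg) simp
  have ev: "eventually (\<lambda>n. n \<ge> 2 \<and> (\<rho> n)\<^sup>2 * real n \<ge> 1 \<and> Mn n > 0) sequentially"
  proof -
    have "eventually (\<lambda>n. (\<rho> n)\<^sup>2 * real n \<ge> 1) sequentially" using rho_n by (simp add: filterlim_at_top)
    moreover have "eventually (\<lambda>n. Mn n \<ge> 1) sequentially" using Mn_inf by (simp add: filterlim_at_top)
    moreover have "eventually (\<lambda>n. n \<ge> (2::nat)) sequentially" by (rule eventually_ge_at_top)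
    ultimately show ?thesis by eventually_elim auto
  qed
  have bnd: "eventually (\<lambda>n. 0 \<le> (SUP f0 \<in> S. exp_post_prob a \<psi> (lam n) n f0 (Mn n * eps n))
      \<and> (SUP f0 \<in> S. exp_post_prob a \<psi> (lam n) n f0 (Mn n * eps n)) \<le> Cb / (Mn n)\<^sup>2) sequentially"
    using ev
  proof eventually_elim
    case (elim n)
    have ub: "\<And>f0. f0 \<in> S \<Longrightarrow> exp_post_prob a \<psi> (lam n) n f0 (Mn n * eps n) \<le> Cb / (Mn n)\<^sup>2"
      using key elim unfolding S_def by blast
    have up: "(SUP f0 \<in> S. exp_post_prob a \<psi> (lam n) n f0 (Mn n * eps n)) \<le> Cb / (Mn n)\<^sup>2"
      using zS ub by (intro cSUP_least) auto
    have bdd: "bdd_above ((\<lambda>f0. exp_post_prob a \<psi> (lam n) n f0 (Mn n * eps n)) ` S)"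
      using ub by (intro bdd_aboveI2) auto
    have "0 \<le> exp_post_prob a \<psi> (lam n) n (\<lambda>_. 0) (Mn n * eps n)" by (rule nn)
    also have "\<dots> \<le> (SUP f0 \<in> S. exp_post_prob a \<psi> (lam n) n f0 (Mn n * eps n))"
      by (rule cSUP_upper[OF zS bdd])
    finally show ?case using up by simp
  qed
  have lim0: "(\<lambda>n. Cb / (Mn n)\<^sup>2) \<longlonglongrightarrow> 0"
    by (intro tendsto_divide_0[OF tendsto_const] filterlim_at_top_imp_at_infinity filterlim_pow_at_top Mn_inf) simp
  have P1: "(\<lambda>n. SUP f0 \<in> S. exp_post_prob a \<psi> (lam n) n f0 (Mn n * eps n)) \<longlonglongrightarrow> 0"
  proof (rule tendsto_sandwich[OF _ _ tendsto_const lim0])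
    show "eventually (\<lambda>n. 0 \<le> (SUP f0 \<in> S. exp_post_prob a \<psi> (lam n) n f0 (Mn n * eps n))) sequentially"
      using bnd by (rule eventually_mono) simp
    show "eventually (\<lambda>n. (SUP f0 \<in> S. exp_post_prob a \<psi> (lam n) n f0 (Mn n * eps n)) \<le> Cb / (Mn n)\<^sup>2) sequentially"
      using bnd by (rule eventually_mono) simp
  qed
  show ?thesis using P1 P2 P3 P4 unfolding S_def by blast
qed

end
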